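(* The edge generating series of the Motzkin lattices is $$\sum_{n\ge0}\ell(\mathcal{M}_n)x^n=\frac{(1+x)\big(1-2x-x^2-(1-x)\sqrt{1-2x-3x^2}\big)}{2x^2\sqrt{1-2x-3x^2}}.$$ Moreover: (i) for $n\ge1$, $\ell(\mathcal{M}_n)=T_n-M_n+T_{n-1}-M_{n-1}$; (ii) for $n\ge3$, $\ell(\mathcal{M}_n)=[x^{n-2}](1+x+x^2)^n+[x^{n-3}](1+x+x^2)^{n-1}$; (iii) for $n\ge1$, $\ell(\mathcal{M}_n)=\frac2n\sum_{k=0}^{\lfloor n/2\rfloor}\binom nk\binom{n-k}{k}\frac{k(n-k)}{k+1}$. Finally, $\ell(\mathcal{M}_n)\sim \frac{2\cdot3^n}{\sqrt{3n\pi}}$ and $i(\mathcal{M}_n)=\ell(\mathcal{M}_n)/|\mathcal{M}_n|\sim\frac49 n$.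
   Context: Steps: $U=(1,1)$, $D=(1,-1)$, $H=(1,0)$. $\mathcal{M}_n$ is the set of Motzkin paths of length $n$ (lattice paths from $(0,0)$ to $(n,0)$ with steps $U,D,H$ never going below the $x$-axis), partially ordered by $\gamma_1\le\gamma_2$ iff $\gamma_1$ lies weakly below $\gamma_2$. $\ell(P)$ is the number of edges (covering pairs) of the Hasse diagram of a finite poset $P$, and $i(P)=\ell(P)/|P|$. $T_n=[x^n](1+x+x^2)^n$ is the central trinomial coefficient (generating series $1/\sqrt{1-2x-3x^2}$), and $M_n=|\mathcal{M}_n|$ is the $n$-th Motzkin number (generating series $(1-x-\sqrt{1-2x-3x^2})/(2x^2)$). $a_n\sim b_n$ means $a_n/b_n\to1$. *)

theory Defs
  imports "HOL-Analysis.Analysis" "HOL-Computational_Algebra.Polynomial" "HOL-Library.Landau_Symbols"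
begin

text \<open>Steps U=(1,1), D=(1,-1), H=(1,0); a path is the list of its steps.\<close>
datatype step = U | D | H

fun step_val :: "step \<Rightarrow> int" where
  "step_val U = 1" | "step_val D = -1" | "step_val H = 0"

definition height :: "step list \<Rightarrow> int" where
  "height p = sum_list (map step_val p)"

definition motzkin_paths :: "nat \<Rightarrow> step list set" where
  "motzkin_paths n = {p. length p = n \<and> (\<forall>i\<le>n. height (take i p) \<ge> 0) \<and> height p = 0}"

definition path_le :: "step list \<Rightarrow> step list \<Rightarrow> bool" where
  "path_le p q \<longleftrightarrow> length p = length q \<and>
     (\<forall>i\<le>length p. height (take i p) \<le> height (take i q))"

definition covers :: "'a set \<Rightarrow> ('a \<Rightarrow> 'a \<Rightarrow> bool) \<Rightarrow> ('a \<times> 'a) set" where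
  "covers P le = {(a, b). a \<in> P \<and> b \<in> P \<and> a \<noteq> b \<and> le a b \<and>
      \<not> (\<exists>c\<in>P. c \<noteq> a \<and> c \<noteq> b \<and> le a c \<and> le c b)}"

definition hasse_edges :: "'a set \<Rightarrow> ('a \<Rightarrow> 'a \<Rightarrow> bool) \<Rightarrow> nat" where
  "hasse_edges P le = card (covers P le)"

definition ellM :: "nat \<Rightarrow> nat" where
  "ellM n = hasse_edges (motzkin_paths n) path_le"

definition motzkin :: "nat \<Rightarrow> nat" where
  "motzkin n = card (motzkin_paths n)"

definition trinom :: "nat \<Rightarrow> nat \<Rightarrow> nat" where
  "trinom m k = coeff ([:1, 1, 1:] ^ m) k"

definition central_trinomial :: "nat \<Rightarrow> nat" where
  "central_trinomial n = trinom n n"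

end

theory Submission
  imports Defs "HOL-Real_Asymp.Real_Asymp" "HOL-Probability.Hoeffding" "HOL-Analysis.FPS_Convergence"
begin

lemma trinom_0: "trinom 0 k = (if k = 0 then 1 else 0)"
  by (simp add: trinom_def)

lemma trinom_Suc: "trinom (Suc n) k = trinom n k + (if k \<ge> 1 then trinom n (k-1) else 0)
   + (if k \<ge> 2 then trinom n (k-2) else 0)"
proof -
  have "[:1,1,1:] ^ Suc n = [:1,1,1:] * [:1,1,1:] ^ n" by simp
  hence "trinom (Suc n) k = coeff ([:1,1,1:] * [:1,1,1:] ^ n :: nat poly) k" by (simp add: trinom_def)
  also have "\<dots> = trinom n k + (if k \<ge> 1 then trinom n (k-1) else 0)
   + (if k \<ge> 2 then trinom n (k-2) else 0)"
    by (cases k; cases "k - 1") (auto simp: trinom_def coeff_pCons')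
  finally show ?thesis .
qed

definition aa :: "nat \<Rightarrow> int \<Rightarrow> int" where
  "aa n h = (if int n + h < 0 then 0 else int (trinom n (nat (int n + h))))"

lemma aa_0: "aa 0 h = (if h = 0 then 1 else 0)"
  by (auto simp: aa_def trinom_0)

lemma aa_Suc: "aa (Suc n) h = aa n (h - 1) + aa n h + aa n (h + 1)"
proof (cases "int n + 1 + h < 0")
  case True thus ?thesis by (simp add: aa_def)
next
  case False
  define k where "k = nat (int n + 1 + h)"
  have k: "int k = int n + 1 + h" using False by (simp add: k_def)
  have k1: "k \<ge> 1 \<longleftrightarrow> int n + h \<ge> 0" using k by linarith
  have k2: "k \<ge> 2 \<longleftrightarrow> int n + h - 1 \<ge> 0" using k by linarith
  have e0: "nat (int (Suc n) + h) = k" using k by simp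
  have e1: "k - 1 = nat (int n + h)" using k by linarith
  have e2: "k - 2 = nat (int n + (h - 1))" using k by linarith
  have e3: "k = nat (int n + (h + 1))" using k by linarith
  show ?thesis
    unfolding aa_def using False k1 k2 e0 e1 e2 e3 by (simp add: trinom_Suc)
qed

lemma aa_sym: "aa n (- h) = aa n h"
proof (induction n arbitrary: h)
  case 0 thus ?case by (simp add: aa_0)
next
  case (Suc n)
  have "aa n (- h - 1) = aa n (h + 1)" using Suc[of "h+1"] by simp
  moreover have "aa n (- h + 1) = aa n (h - 1)" using Suc[of "h-1"] by simp
  ultimately show ?case using Suc[of h] by (simp add: aa_Suc algebra_simps)
qed

lemma aa_vanish: "\<bar>h\<bar> > int n \<Longrightarrow> aa n h = 0"
proof (induction n arbitrary: h)
  case 0 thus ?case by (simp add: aa_0)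
next
  case (Suc n)
  thus ?case by (simp add: aa_Suc)
qed

lemma aa_nonneg: "aa n h \<ge> 0"
  by (simp add: aa_def)

lemma aa_E: "h * aa (Suc n) h = int (Suc n) * (aa n (h - 1) - aa n (h + 1))"
proof (induction n arbitrary: h)
  case 0 thus ?case by (simp add: aa_Suc aa_0)
next
  case (Suc n)
  have A: "h * aa (Suc (Suc n)) h = (h-1) * aa (Suc n) (h-1) + aa (Suc n) (h-1) + h * aa (Suc n) h
      + (h+1) * aa (Suc n) (h+1) - aa (Suc n) (h+1)"
    by (subst aa_Suc[of "Suc n"]) (simp add: algebra_simps)
  have B: "aa (Suc n) (h-1) = aa n (h-2) + aa n (h-1) + aa n h"
    using aa_Suc[of n "h-1"] by simp
  have C: "aa (Suc n) (h+1) = aa n h + aa n (h+1) + aa n (h+2)"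
    using aa_Suc[of n "h+1"] by (simp add: algebra_simps)
  have D1: "(h-1) * aa (Suc n) (h-1) = int (Suc n) * (aa n (h - 2) - aa n h)"
    using Suc[of "h-1"] by (simp add: algebra_simps)
  have D2: "(h+1) * aa (Suc n) (h+1) = int (Suc n) * (aa n h - aa n (h + 2))"
    using Suc[of "h+1"] by (simp add: algebra_simps)
  show ?case using A B C D1 D2 Suc[of h] by (simp add: algebra_simps)
qed

definition hs :: "step list \<Rightarrow> nat \<Rightarrow> int" where
  "hs p j = height (take j p)"

lemma step_val_bound: "\<bar>step_val x\<bar> \<le> 1"
  by (cases x) auto

lemma step_val_inj: "step_val x = step_val y \<Longrightarrow> x = y"
  by (cases x; cases y) auto

lemma hs_0 [simp]: "hs p 0 = 0"
  by (simp add: hs_def height_def)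

lemma hs_len: "j \<ge> length p \<Longrightarrow> hs p j = height p"
  by (simp add: hs_def)

lemma hs_Suc: "j < length p \<Longrightarrow> hs p (Suc j) = hs p j + step_val (p!j)"
  by (simp add: hs_def height_def take_Suc_conv_app_nth)

lemma sum_list_update_ab:
  "k < length xs \<Longrightarrow> sum_list (xs[k:=x]) = sum_list xs + x - xs!k" for xs :: "int list"
  by (induction xs arbitrary: k) (auto split: nat.splits)

lemma hs_update: "k < length p \<Longrightarrow>
   hs (p[k:=x]) j = hs p j + (if k < j then step_val x - step_val (p!k) else 0)"
proof (cases "k < j")
  case True
  assume k: "k < length p"
  have "take j (p[k:=x]) = (take j p)[k:=x]" by (simp add: take_update_swap)
  moreover have "k < length (take j p)" using k True by simp
  ultimately show ?thesis using True
    by (simp add: hs_def height_def map_update sum_list_update_ab)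
next
  case False
  thus ?thesis by (simp add: hs_def)
qed

lemma hs_eq_imp_eq:
  assumes "length p = length q" "\<And>j. j \<le> length p \<Longrightarrow> hs p j = hs q j"
  shows "p = q"
proof (rule nth_equalityI)
  show "length p = length q" by fact
  fix i assume i: "i < length p"
  have "step_val (p!i) = hs p (Suc i) - hs p i" using hs_Suc[OF i] by simp
  also have "\<dots> = hs q (Suc i) - hs q i" using assms(2) i by simp
  also have "\<dots> = step_val (q!i)" using hs_Suc[of i q] i assms(1) by simp
  finally show "p!i = q!i" by (rule step_val_inj)
qed

fun upS :: "step \<Rightarrow> step" where "upS D = H" | "upS H = U" | "upS U = U"
fun dnS :: "step \<Rightarrow> step" where "dnS U = H" | "dnS H = D" | "dnS D = D"

definition Rset :: "step list \<Rightarrow> nat set" where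
  "Rset p = {i. 0 < i \<and> i < length p \<and> p!(i-1) \<noteq> U \<and> p!i \<noteq> D}"

definition raise :: "step list \<Rightarrow> nat \<Rightarrow> step list" where
  "raise p i = (p[i-1 := upS (p!(i-1))])[i := dnS (p!i)]"

lemma length_raise [simp]: "length (raise p i) = length p"
  by (simp add: raise_def)

lemma hs_raise:
  assumes "i \<in> Rset p"
  shows "hs (raise p i) j = hs p j + (if j = i then 1 else 0)"
proof -
  from assms have i: "0 < i" "i < length p" "p!(i-1) \<noteq> U" "p!i \<noteq> D" by (auto simp: Rset_def)
  define q where "q = p[i-1 := upS (p!(i-1))]"
  have qi: "q!i = p!i" using i by (simp add: q_def)
  have lq: "length q = length p" by (simp add: q_def)
  have u: "step_val (upS (p!(i-1))) = step_val (p!(i-1)) + 1" using i(3) by (cases "p!(i-1)") auto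
  have d: "step_val (dnS (p!i)) = step_val (p!i) - 1" using i(4) by (cases "p!i") auto
  have "hs (raise p i) j = hs q j + (if i < j then step_val (dnS (p!i)) - step_val (q!i) else 0)"
    unfolding raise_def q_def[symmetric] using i lq by (intro hs_update) simp
  also have "hs q j = hs p j + (if i - 1 < j then step_val (upS (p!(i-1))) - step_val (p!(i-1)) else 0)"
    unfolding q_def using i by (intro hs_update) simp
  finally show ?thesis using u d qi i(1) by auto
qed

definition PP :: "nat \<Rightarrow> int \<Rightarrow> step list set" where
  "PP n h = {p. length p = n \<and> (\<forall>i\<le>n. height (take i p) \<ge> 0) \<and> height p = h}"

lemma motzkin_PP: "motzkin_paths n = PP n 0"
  by (simp add: motzkin_paths_def PP_def)

lemma PP_hs: "p \<in> PP n h \<longleftrightarrow> length p = n \<and> (\<forall>i\<le>n. hs p i \<ge> 0) \<and> hs p n = h"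
  by (auto simp: PP_def hs_def)

lemma path_le_hs: "path_le p q \<longleftrightarrow> length p = length q \<and> (\<forall>i\<le>length p. hs p i \<le> hs q i)"
  by (simp add: path_le_def hs_def)

lemma raise_in:
  assumes "a \<in> PP n 0" "i \<in> Rset a"
  shows "raise a i \<in> PP n 0"
proof -
  have "i < n" using assms by (auto simp: Rset_def PP_def)
  thus ?thesis using assms hs_raise[OF assms(2)] by (auto simp: PP_hs)
qed

lemma raise_cover:
  assumes a: "a \<in> PP n 0" and i: "i \<in> Rset a"
  shows "(a, raise a i) \<in> covers (PP n 0) path_le"
proof -
  let ?b = "raise a i"
  have la: "length a = n" using a by (simp add: PP_def)
  have hb: "\<And>j. hs ?b j = hs a j + (if j = i then 1 else 0)" using hs_raise[OF i] .
  have iln: "i < n" using i la by (auto simp: Rset_def)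
  have neq: "a \<noteq> ?b" using hb[of i] by auto
  have le: "path_le a ?b" using hb la by (simp add: path_le_hs)
  have "\<not> (\<exists>c\<in>PP n 0. c \<noteq> a \<and> c \<noteq> ?b \<and> path_le a c \<and> path_le c ?b)"
  proof
    assume "\<exists>c\<in>PP n 0. c \<noteq> a \<and> c \<noteq> ?b \<and> path_le a c \<and> path_le c ?b"
    then obtain c where c: "c \<in> PP n 0" "c \<noteq> a" "c \<noteq> ?b" "path_le a c" "path_le c ?b" by blast
    have lc: "length c = n" using c(1) by (simp add: PP_def)
    have l1: "\<And>j. j \<le> n \<Longrightarrow> hs a j \<le> hs c j" using c(4) la by (simp add: path_le_hs)
    have l2: "\<And>j. j \<le> n \<Longrightarrow> hs c j \<le> hs ?b j" using c(5) lc by (simp add: path_le_hs)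
    have eqj: "\<And>j. j \<le> n \<Longrightarrow> j \<noteq> i \<Longrightarrow> hs c j = hs a j"
    proof -
      fix j assume "j \<le> n" "j \<noteq> i"
      thus "hs c j = hs a j" using l1[of j] l2[of j] hb[of j] by simp
    qed
    show False
    proof (cases "hs c i = hs a i")
      case True
      have "c = a" by (rule hs_eq_imp_eq) (use lc la eqj True in auto)
      thus False using c(2) by simp
    next
      case False
      hence "hs c i = hs ?b i" using l1[of i] l2[of i] hb[of i] iln by simp
      hence "c = ?b" using lc la eqj hb by (intro hs_eq_imp_eq) auto
      thus False using c(3) by simp
    qed
  qed
  thus ?thesis using a raise_in[OF a i] neq le by (simp add: covers_def)
qed

lemma hs_lip: "j < length p \<Longrightarrow> \<bar>hs p (Suc j) - hs p j\<bar> \<le> 1"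
  using hs_Suc[of j p] step_val_bound[of "p!j"] by simp

lemma cover_is_raise:
  assumes cv: "(a, b) \<in> covers (PP n 0) path_le"
  shows "\<exists>i\<in>Rset a. b = raise a i"
proof -
  from cv have a: "a \<in> PP n 0" and b: "b \<in> PP n 0" and ab: "a \<noteq> b" and le: "path_le a b"
    and nc: "\<not> (\<exists>c\<in>PP n 0. c \<noteq> a \<and> c \<noteq> b \<and> path_le a c \<and> path_le c b)"
    by (auto simp: covers_def)
  have la: "length a = n" and lb: "length b = n" using a b by (auto simp: PP_def)
  have l: "\<And>j. j \<le> n \<Longrightarrow> hs a j \<le> hs b j" using le la by (simp add: path_le_hs)
  have ha0: "hs a n = 0" and hb0: "hs b n = 0" using a b by (auto simp: PP_hs)
  define S where "S = {j. j \<le> n \<and> hs a j < hs b j}"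
  have fS: "finite S" by (simp add: S_def)
  have neS: "S \<noteq> {}"
  proof
    assume "S = {}"
    hence "\<And>j. j \<le> n \<Longrightarrow> hs a j = hs b j" using l by (fastforce simp: S_def)
    hence "a = b" using la lb by (intro hs_eq_imp_eq) auto
    thus False using ab by simp
  qed
  define m where "m = Min (hs a ` S)"
  have "m \<in> hs a ` S" unfolding m_def using fS neS by (intro Min_in) auto
  then obtain i where iS: "i \<in> S" and mi: "hs a i = m" by auto
  have minim: "\<And>j. j \<in> S \<Longrightarrow> hs a i \<le> hs a j" unfolding mi m_def using fS by (intro Min_le) auto
  have iS': "i \<le> n" "hs a i < hs b i" using iS by (auto simp: S_def)
  have i0: "i \<noteq> 0" using iS' by (cases i) auto
  have in': "i \<noteq> n" using iS' ha0 hb0 by auto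
  have iR: "i \<in> Rset a"
  proof -
    have "a!(i-1) \<noteq> U"
    proof
      assume aU: "a!(i-1) = U"
      have e: "hs a i = hs a (i-1) + 1" using hs_Suc[of "i-1" a] aU i0 iS' la by simp
      show False
      proof (cases "i - 1 \<in> S")
        case True thus False using minim[OF True] e by simp
      next
        case False
        hence "hs a (i-1) = hs b (i-1)" using l[of "i-1"] iS' by (auto simp: S_def)
        moreover have "i - 1 < length b" using i0 iS' lb by simp
        hence "hs b i \<le> hs b (i-1) + 1" using hs_lip[of "i-1" b] i0 by (simp add: abs_le_iff)
        ultimately show False using e iS' by simp
      qed
    qed
    moreover have "a!i \<noteq> D"
    proof
      assume aD: "a!i = D"
      have e: "hs a (Suc i) = hs a i - 1" using hs_Suc[of i a] aD in' iS' la by simp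
      show False
      proof (cases "Suc i \<in> S")
        case True thus False using minim[OF True] e by simp
      next
        case False
        hence "hs a (Suc i) = hs b (Suc i)" using l[of "Suc i"] iS' in' by (auto simp: S_def)
        moreover have "hs b i \<le> hs b (Suc i) + 1" using hs_lip[of i b] iS' in' lb by (simp add: abs_le_iff)
        ultimately show False using e iS' by simp
      qed
    qed
    ultimately show ?thesis using i0 iS' in' la by (auto simp: Rset_def)
  qed
  let ?c = "raise a i"
  have hc: "\<And>j. hs ?c j = hs a j + (if j = i then 1 else 0)" using hs_raise[OF iR] .
  have c: "?c \<in> PP n 0" using raise_in[OF a iR] .
  have "path_le a ?c" using hc la by (simp add: path_le_hs)
  moreover have "path_le ?c b" using hc la lb l iS' by (auto simp: path_le_hs)
  moreover have "?c \<noteq> a" using hc[of i] by auto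
  ultimately have "?c = b" using nc c by blast
  thus ?thesis using iR by auto
qed

lemma finite_PP: "finite (PP n h)"
proof -
  have U: "(UNIV :: step set) = {U, D, H}" by (auto intro: step.exhaust)
  have "PP n h \<subseteq> {xs. set xs \<subseteq> UNIV \<and> length xs = n}" by (auto simp: PP_def)
  moreover have "finite {xs. set xs \<subseteq> (UNIV :: step set) \<and> length xs = n}"
    by (rule finite_lists_length_eq) (simp add: U)
  ultimately show ?thesis by (rule finite_subset)
qed

lemma finite_Rset: "finite (Rset p)"
  by (rule finite_subset[of _ "{..<length p}"]) (auto simp: Rset_def)

lemma ellM_sum: "ellM n = (\<Sum>a\<in>PP n 0. card (Rset a))"
proof -
  have eq: "covers (PP n 0) path_le = (\<lambda>(a,i). (a, raise a i)) ` Sigma (PP n 0) Rset"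
  proof
    show "covers (PP n 0) path_le \<subseteq> (\<lambda>(a,i). (a, raise a i)) ` Sigma (PP n 0) Rset"
    proof
      fix x assume x: "x \<in> covers (PP n 0) path_le"
      obtain a b where xab: "x = (a,b)" by fastforce
      have "a \<in> PP n 0" using x xab by (auto simp: covers_def)
      moreover obtain i where "i \<in> Rset a" "b = raise a i" using cover_is_raise x xab by blast
      ultimately show "x \<in> (\<lambda>(a,i). (a, raise a i)) ` Sigma (PP n 0) Rset" using xab by force
    qed
  next
    show "(\<lambda>(a,i). (a, raise a i)) ` Sigma (PP n 0) Rset \<subseteq> covers (PP n 0) path_le"
      using raise_cover by auto
  qed
  have inj: "inj_on (\<lambda>(a,i). (a, raise a i)) (Sigma (PP n 0) Rset)"
  proof (rule inj_onI, clarsimp)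
    fix a i j assume "i \<in> Rset a" "j \<in> Rset a" "raise a i = raise a j"
    hence "hs (raise a i) i = hs (raise a j) i" by simp
    thus "i = j" using hs_raise[of i a i] hs_raise[of j a i] \<open>i \<in> Rset a\<close> \<open>j \<in> Rset a\<close>
      by (auto split: if_splits)
  qed
  have "ellM n = card (covers (PP n 0) path_le)" by (simp add: ellM_def hasse_edges_def motzkin_PP)
  also have "\<dots> = card (Sigma (PP n 0) Rset)" unfolding eq by (rule card_image[OF inj])
  also have "\<dots> = (\<Sum>a\<in>PP n 0. card (Rset a))" by (rule card_SigmaI) (auto simp: finite_PP finite_Rset)
  finally show ?thesis .
qed

fun cntH :: "step list \<Rightarrow> nat" where
  "cntH [] = 0" | "cntH (x # xs) = (if x = H then 1 else 0) + cntH xs"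

fun cntUD :: "step list \<Rightarrow> nat" where
  "cntUD (x # y # xs) = (if x = U \<and> y = D then 1 else 0) + cntUD (y # xs)"
| "cntUD _ = 0"

fun rcount :: "step list \<Rightarrow> nat" where
  "rcount (x # y # xs) = (if x \<noteq> U \<and> y \<noteq> D then 1 else 0) + rcount (y # xs)"
| "rcount _ = 0"

lemma Rset_Nil: "Rset [] = {}" and Rset_single: "Rset [x] = {}"
  by (auto simp: Rset_def)

lemma Rset_Cons2: "Rset (x # y # xs) =
   (if x \<noteq> U \<and> y \<noteq> D then insert 1 (Suc ` Rset (y # xs)) else Suc ` Rset (y # xs))"
proof -
  have A: "i \<in> Rset (x # y # xs) \<longleftrightarrow> (i = 1 \<and> x \<noteq> U \<and> y \<noteq> D) \<or> (\<exists>j. i = Suc j \<and> j \<in> Rset (y # xs))" for i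
  proof (cases i)
    case 0 thus ?thesis by (simp add: Rset_def)
  next
    case (Suc j)
    show ?thesis
    proof (cases j)
      case 0 thus ?thesis using Suc by (simp add: Rset_def)
    next
      case (Suc k)
      thus ?thesis using \<open>i = Suc j\<close> by (simp add: Rset_def)
    qed
  qed
  show ?thesis
  proof (rule set_eqI)
    fix i show "i \<in> Rset (x # y # xs) \<longleftrightarrow> i \<in> (if x \<noteq> U \<and> y \<noteq> D then insert 1 (Suc ` Rset (y # xs)) else Suc ` Rset (y # xs))"
      unfolding A by auto
  qed
qed

lemma card_Rset: "card (Rset p) = rcount p"
proof (induction p rule: rcount.induct)
  case (1 x y xs)
  have "0 \<notin> Rset (y # xs)" by (simp add: Rset_def)
  hence n1: "1 \<notin> Suc ` Rset (y # xs)" by auto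
  have "card (Suc ` Rset (y # xs)) = card (Rset (y # xs))" by (simp add: card_image)
  show ?case
  proof (cases "x \<noteq> U \<and> y \<noteq> D")
    case True thus ?thesis using 1 n1 \<open>card (Suc ` Rset (y # xs)) = card (Rset (y # xs))\<close>
      by (simp add: Rset_Cons2 finite_Rset)
  next
    case False
    hence "Rset (x # y # xs) = Suc ` Rset (y # xs)" by (simp only: Rset_Cons2 if_not_P[OF False] if_False)
    thus ?thesis using 1 False \<open>card (Suc ` Rset (y # xs)) = card (Rset (y # xs))\<close> by simp
  qed
qed (simp_all add: Rset_Nil Rset_single)

lemma rcount_id: "q \<noteq> [] \<Longrightarrow> int (rcount q) + (if hd q \<noteq> D then 1 else 0) + (if last q \<noteq> U then 1 else 0)
   = int (cntH q) + int (cntUD q) + 1"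
proof (induction q rule: rcount.induct)
  case (1 x y xs)
  show ?case using 1 by (cases x; cases y) auto
next
  case ("2_2" v) thus ?case by (cases v) auto
qed simp

lemma PP_neg: "h < 0 \<Longrightarrow> PP n h = {}"
  by (auto simp: PP_def)

lemma PP_0: "PP 0 h = (if h = 0 then {[]} else {})"
  by (auto simp: PP_def height_def)

lemma height_snoc [simp]: "height (p @ [x]) = height p + step_val x"
  by (simp add: height_def)

lemma PP_Suc:
  assumes h: "h \<ge> 0"
  shows "PP (Suc n) h = (\<lambda>p. p @ [D]) ` PP n (h+1) \<union> (\<lambda>p. p @ [H]) ` PP n h \<union> (\<lambda>p. p @ [U]) ` PP n (h-1)"
proof (intro equalityI subsetI)
  fix q assume q: "q \<in> PP (Suc n) h"
  hence lq: "length q = Suc n" by (simp add: PP_def)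
  hence "q \<noteq> []" by auto
  then obtain p x where qpx: "q = p @ [x]" by (metis append_butlast_last_id)
  have lp: "length p = n" using lq qpx by simp
  have pre: "\<forall>i\<le>n. height (take i p) \<ge> 0"
  proof (intro allI impI)
    fix i assume "i \<le> n"
    hence "take i q = take i p" using qpx lp by simp
    moreover have "height (take i q) \<ge> 0" using q \<open>i \<le> n\<close> by (simp add: PP_def)
    ultimately show "height (take i p) \<ge> 0" by simp
  qed
  have hq: "height p + step_val x = h" using q qpx by (simp add: PP_def)
  show "q \<in> (\<lambda>p. p @ [D]) ` PP n (h+1) \<union> (\<lambda>p. p @ [H]) ` PP n h \<union> (\<lambda>p. p @ [U]) ` PP n (h-1)"
    using pre lp hq qpx by (cases x) (auto simp: PP_def)
next
  fix q assume "q \<in> (\<lambda>p. p @ [D]) ` PP n (h+1) \<union> (\<lambda>p. p @ [H]) ` PP n h \<union> (\<lambda>p. p @ [U]) ` PP n (h-1)"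
  then obtain p x g where qpx: "q = p @ [x]" and p: "p \<in> PP n g" and g: "g + step_val x = h"
    by auto
  have lp: "length p = n" using p by (simp add: PP_def)
  have "\<forall>i\<le>Suc n. height (take i q) \<ge> 0"
  proof (intro allI impI)
    fix i assume i: "i \<le> Suc n"
    show "height (take i q) \<ge> 0"
    proof (cases "i = Suc n")
      case True thus ?thesis using qpx lp p g h by (simp add: PP_def)
    next
      case False
      hence "take i q = take i p" using qpx lp i by simp
      thus ?thesis using p i False by (simp add: PP_def)
    qed
  qed
  thus "q \<in> PP (Suc n) h" using qpx lp p g by (simp add: PP_def)
qed

lemma sum_PP_Suc:
  fixes f :: "step list \<Rightarrow> int"
  assumes h: "h \<ge> 0"
  shows "(\<Sum>q\<in>PP (Suc n) h. f q) = (\<Sum>p\<in>PP n (h+1). f (p @ [D])) + (\<Sum>p\<in>PP n h. f (p @ [H]))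
     + (\<Sum>p\<in>PP n (h-1). f (p @ [U]))"
proof -
  have inj: "inj_on (\<lambda>p. p @ [x]) A" for x A by (auto intro: inj_onI)
  have fin: "finite ((\<lambda>p. p @ [x]) ` PP n g)" for x g by (simp add: finite_PP)
  have d: "(\<lambda>p. p @ [x]) ` A \<inter> (\<lambda>p. p @ [y]) ` B = {}" if "x \<noteq> y" for x y A B using that by auto
  have "(\<Sum>q\<in>PP (Suc n) h. f q) = (\<Sum>q\<in>(\<lambda>p. p @ [D]) ` PP n (h+1). f q) + (\<Sum>q\<in>(\<lambda>p. p @ [H]) ` PP n h. f q)
     + (\<Sum>q\<in>(\<lambda>p. p @ [U]) ` PP n (h-1). f q)"
    unfolding PP_Suc[OF h]
    by (subst sum.union_disjoint, simp_all add: fin d Int_Un_distrib2)+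
  also have "\<dots> = (\<Sum>p\<in>PP n (h+1). f (p @ [D])) + (\<Sum>p\<in>PP n h. f (p @ [H]))
     + (\<Sum>p\<in>PP n (h-1). f (p @ [U]))"
    by (simp add: sum.reindex[OF inj])
  finally show ?thesis .
qed

definition NN :: "nat \<Rightarrow> int \<Rightarrow> int" where "NN n h = int (card (PP n h))"

lemma NN_neg: "h < 0 \<Longrightarrow> NN n h = 0" by (simp add: NN_def PP_neg)
lemma NN_0: "NN 0 h = (if h = 0 then 1 else 0)" by (simp add: NN_def PP_0)

lemma NN_Suc: "h \<ge> 0 \<Longrightarrow> NN (Suc n) h = NN n (h+1) + NN n h + NN n (h-1)"
  using sum_PP_Suc[of h "\<lambda>_. 1" n] by (simp add: NN_def)

lemma NN_refl: "h \<ge> 0 \<Longrightarrow> NN n h = aa n h - aa n (h+2)"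
proof (induction n arbitrary: h)
  case 0 thus ?case by (simp add: NN_0 aa_0)
next
  case (Suc n)
  show ?case
  proof (cases "h = 0")
    case True
    have "aa n (-1) = aa n 1" using aa_sym[of n 1] by simp
    thus ?thesis using True Suc.IH[of 1] Suc.IH[of 0] by (simp add: NN_Suc NN_neg aa_Suc)
  next
    case False
    hence "h \<ge> 1" using Suc.prems by simp
    thus ?thesis using Suc.IH[of "h+1"] Suc.IH[of h] Suc.IH[of "h-1"] Suc.prems
      by (simp add: NN_Suc aa_Suc algebra_simps)
  qed
qed

lemma int_if01: "int (if P then 1 else 0) = (if P then 1 else 0)" by simp

lemma cntH_snoc [simp]: "cntH (p @ [x]) = cntH p + (if x = H then 1 else 0)"
  by (induction p) auto

lemma cntUD_snoc [simp]: "cntUD (p @ [x]) = cntUD p + (if x = D \<and> p \<noteq> [] \<and> last p = U then 1 else 0)"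
  by (induction p rule: cntUD.induct) auto

lemma sum_H: "(\<Sum>p\<in>PP n h. int (cntH p)) = int n * NN (n - 1) h"
proof (induction n arbitrary: h)
  case 0 thus ?case by (simp add: PP_0)
next
  case (Suc n)
  show ?case
  proof (cases "h \<ge> 0")
    case False thus ?thesis by (simp add: PP_neg NN_neg)
  next
    case True
    have "(\<Sum>p\<in>PP (Suc n) h. int (cntH p)) = (\<Sum>p\<in>PP n (h+1). int (cntH p)) + ((\<Sum>p\<in>PP n h. int (cntH p)) + NN n h)
      + (\<Sum>p\<in>PP n (h-1). int (cntH p))"
      using sum_PP_Suc[OF True, of "\<lambda>q. int (cntH q)" n] by (simp add: sum.distrib NN_def)
    also have "\<dots> = int n * (NN (n-1) (h+1) + NN (n-1) h + NN (n-1) (h-1)) + NN n h"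
      using Suc.IH by (simp add: algebra_simps)
    also have "\<dots> = int (Suc n) * NN n h"
    proof (cases n)
      case (Suc m) thus ?thesis using NN_Suc[OF True, of m] by (simp add: algebra_simps)
    qed simp
    finally show ?thesis by simp
  qed
qed

lemma sum_LU: "(\<Sum>p\<in>PP (Suc n) h. (if p \<noteq> [] \<and> last p = U then 1 else 0 :: int)) = NN n (h-1)"
proof (cases "h \<ge> 0")
  case False thus ?thesis by (simp add: PP_neg NN_neg)
next
  case True
  show ?thesis using sum_PP_Suc[OF True, of "\<lambda>p. (if p \<noteq> [] \<and> last p = U then 1 else 0 :: int)" n]
    by (simp add: NN_def)
qed

lemma sum_UD: "(\<Sum>p\<in>PP (Suc n) h. int (cntUD p)) = int n * NN (n - 1) h"
proof (induction n arbitrary: h)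
  case 0
  show ?case
  proof (cases "h \<ge> 0")
    case False thus ?thesis by (simp add: PP_neg)
  next
    case True thus ?thesis using sum_PP_Suc[OF True, of "\<lambda>q. int (cntUD q)" 0] by (simp add: PP_0)
  qed
next
  case (Suc n)
  show ?case
  proof (cases "h \<ge> 0")
    case False thus ?thesis by (simp add: PP_neg NN_neg)
  next
    case True
    have "(\<Sum>p\<in>PP (Suc (Suc n)) h. int (cntUD p)) = ((\<Sum>p\<in>PP (Suc n) (h+1). int (cntUD p))
        + (\<Sum>p\<in>PP (Suc n) (h+1). (if p \<noteq> [] \<and> last p = U then 1 else 0 :: int)))
      + (\<Sum>p\<in>PP (Suc n) h. int (cntUD p)) + (\<Sum>p\<in>PP (Suc n) (h-1). int (cntUD p))"
      using sum_PP_Suc[OF True, of "\<lambda>q. int (cntUD q)" "Suc n"] by (simp add: sum.distrib of_nat_add int_if01)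
    also have "\<dots> = int n * (NN (n-1) (h+1) + NN (n-1) h + NN (n-1) (h-1)) + NN n h"
      using Suc.IH sum_LU[of n "h+1"] by (simp add: algebra_simps)
    also have "\<dots> = int (Suc n) * NN n h"
    proof (cases n)
      case (Suc m) thus ?thesis using NN_Suc[OF True, of m] by (simp add: algebra_simps)
    qed simp
    finally show ?thesis by simp
  qed
qed

lemma PP_hd_last:
  assumes "p \<in> PP (Suc n) 0"
  shows "hd p \<noteq> D" "last p \<noteq> U" "p \<noteq> []"
proof -
  have lp: "length p = Suc n" using assms by (simp add: PP_def)
  thus "p \<noteq> []" by auto
  have "hs p 1 \<ge> 0" using assms by (simp add: PP_hs)
  moreover have "hs p 1 = step_val (p!0)" using hs_Suc[of 0 p] lp by simp
  moreover have "hd p = p!0" using lp by (cases p) auto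
  ultimately show "hd p \<noteq> D" by auto
  have "hs p n \<ge> 0" "hs p (Suc n) = 0" using assms by (simp_all add: PP_hs)
  moreover have "hs p (Suc n) = hs p n + step_val (p!n)" using hs_Suc[of n p] lp by simp
  moreover have "last p = p!n" using lp \<open>p \<noteq> []\<close> by (simp add: last_conv_nth)
  ultimately show "last p \<noteq> U" by auto
qed

lemma ellM_NN: "int (ellM (Suc n)) = int (Suc n) * NN n 0 + int n * NN (n - 1) 0 - NN (Suc n) 0"
proof -
  have "int (ellM (Suc n)) = (\<Sum>a\<in>PP (Suc n) 0. int (rcount a))" by (simp add: ellM_sum card_Rset)
  also have "\<dots> = (\<Sum>a\<in>PP (Suc n) 0. int (cntH a) + int (cntUD a) - 1)"
  proof (rule sum.cong[OF refl])
    fix a assume "a \<in> PP (Suc n) 0"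
    thus "int (rcount a) = int (cntH a) + int (cntUD a) - 1"
      using rcount_id[of a] PP_hd_last[of a n] by simp
  qed
  also have "\<dots> = int (Suc n) * NN n 0 + int n * NN (n - 1) 0 - NN (Suc n) 0"
    using sum_H[of "Suc n" 0] sum_UD[of n 0] by (simp add: sum.distrib sum_subtractf NN_def)
  finally show ?thesis .
qed

lemma coeff_11_power: "coeff ([:1,1:] ^ m :: nat poly) i = m choose i"
proof (cases "i \<le> m")
  case True thus ?thesis using coeff_linear_poly_power[of i m "1::nat" 1] by simp
next
  case False
  have "degree ([:1,1:] ^ m :: nat poly) \<le> m"
    using degree_power_le[of "[:1,1:] :: nat poly" m] by simp
  hence "coeff ([:1,1:] ^ m :: nat poly) i = 0" using False by (intro coeff_eq_0) auto
  thus ?thesis using False by simp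
qed

lemma coeff_11_power': "coeff ([:Suc 0, Suc 0:] ^ m :: nat poly) i = m choose i"
  using coeff_11_power by simp

lemma trinom_sum: "trinom n k = (\<Sum>j\<le>n. (n choose j) * (if 2*j \<le> k then (n-j) choose (k - 2*j) else 0))"
proof -
  have P: "[:1,1,1:] = monom (1::nat) 2 + [:1,1:]"
    by (simp add: monom_altdef numeral_2_eq_2 power2_eq_square monom_Suc monom_0)
  have "[:1,1,1:] ^ n = (\<Sum>j\<le>n. of_nat (n choose j) * monom (1::nat) 2 ^ j * [:1,1:] ^ (n-j))"
    unfolding P by (rule binomial_ring)
  also have "\<dots> = (\<Sum>j\<le>n. monom (n choose j) (2*j) * [:1,1:] ^ (n-j))"
    by (intro sum.cong refl) (simp add: monom_power of_nat_poly smult_monom mult.commute[of 2])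
  finally have "trinom n k = (\<Sum>j\<le>n. coeff (monom (n choose j) (2*j) * [:1,1:] ^ (n-j)) k)"
    by (simp add: trinom_def coeff_sum)
  also have "\<dots> = (\<Sum>j\<le>n. (n choose j) * (if 2*j \<le> k then (n-j) choose (k - 2*j) else 0))"
    by (intro sum.cong refl) (simp add: coeff_monom_mult coeff_11_power')
  finally show ?thesis .
qed

lemma ellM_0: "ellM 0 = 0"
  using ellM_sum[of 0] by (simp add: PP_0 Rset_Nil)

lemma ellM_Suc: "int (ellM (Suc m)) = aa (Suc m) 2 + aa m 2"
proof -
  have e1: "aa (Suc m) 1 = int (Suc m) * NN m 0" using aa_E[of 1 m] NN_refl[of 0 m] by simp
  have e2: "int m * NN (m - 1) 0 = aa m 1"
  proof (cases m)
    case 0 thus ?thesis by (simp add: aa_0)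
  next
    case (Suc k) thus ?thesis using aa_E[of 1 k] NN_refl[of 0 k] by simp
  qed
  have s1: "aa m (-1) = aa m 1" using aa_sym[of m 1] by simp
  have "int (ellM (Suc m)) = aa (Suc m) 1 + aa m 1 - (aa (Suc m) 0 - aa (Suc m) 2)"
    using ellM_NN[of m] e1 e2 NN_refl[of 0 "Suc m"] by simp
  also have "\<dots> = aa (Suc m) 2 + aa m 2"
    using aa_Suc[of m 0] aa_Suc[of m 1] s1 by simp
  finally show ?thesis .
qed

lemma motzkin_NN: "int (motzkin n) = NN n 0"
  by (simp add: motzkin_def motzkin_PP NN_def)

lemma motzkin_aa: "int (motzkin n) = aa n 0 - aa n 2"
  using motzkin_NN NN_refl[of 0 n] by simp

lemma central_aa: "int (central_trinomial n) = aa n 0"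
  by (simp add: central_trinomial_def aa_def)

lemma trinom_aa: "int (trinom n k) = aa n (int k - int n)"
  by (simp add: aa_def)

theorem part_i: "\<forall>n\<ge>1. int (ellM n) = int (central_trinomial n) - int (motzkin n)
                 + int (central_trinomial (n - 1)) - int (motzkin (n - 1))"
proof (intro allI impI)
  fix n :: nat assume "n \<ge> 1"
  then obtain m where n: "n = Suc m" by (cases n) auto
  show "int (ellM n) = int (central_trinomial n) - int (motzkin n)
                 + int (central_trinomial (n - 1)) - int (motzkin (n - 1))"
    unfolding n using ellM_Suc[of m] by (simp add: central_aa motzkin_aa)
qed

theorem part_ii: "\<forall>n\<ge>3. ellM n = trinom n (n - 2) + trinom (n - 1) (n - 3)"
proof (intro allI impI)
  fix n :: nat assume n3: "n \<ge> 3"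
  then obtain m where n: "n = Suc m" by (cases n) auto
  have "int (ellM n) = aa n 2 + aa m 2" using ellM_Suc[of m] n by simp
  also have "aa n 2 = aa n (-2)" using aa_sym[of n 2] by simp
  also have "aa m 2 = aa m (-2)" using aa_sym[of m 2] by simp
  also have "aa n (-2) = int (trinom n (n - 2))" using n3 by (simp add: trinom_aa of_nat_diff)
  also have "aa m (-2) = int (trinom (n - 1) (n - 3))" using n3 n by (simp add: trinom_aa of_nat_diff)
  finally show "ellM n = trinom n (n - 2) + trinom (n - 1) (n - 3)" by linarith
qed

definition W :: "nat \<Rightarrow> nat \<Rightarrow> real" where
  "W n i = real (n choose i) * real ((n - i) choose i)"

lemma W_zero: "2 * i > n \<Longrightarrow> W n i = 0"
  by (simp add: W_def) arith

lemma frac1: "(c::real) \<noteq> 0 \<Longrightarrow> F \<noteq> 0 \<Longrightarrow> A \<noteq> 0 \<Longrightarrow> B \<noteq> 0 \<Longrightarrow> K \<noteq> 0 \<Longrightarrow> N / ((c * F) * A) * (A / (B * K)) * c = N / (F * B * K)"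
  by (simp add: field_simps)
lemma frac2: "(c::real) \<noteq> 0 \<Longrightarrow> A \<noteq> 0 \<Longrightarrow> K \<noteq> 0 \<Longrightarrow> B \<noteq> 0 \<Longrightarrow>
     N / (B * A) * (A / (B * (c * K))) * c = N / (B * B * K)" by (simp add: field_simps)

lemma frac3: "(c::real) \<noteq> 0 \<Longrightarrow> A \<noteq> 0 \<Longrightarrow> K \<noteq> 0 \<Longrightarrow> B \<noteq> 0 \<Longrightarrow>
     N / ((c * K) * A) * (A / ((c * K) * B)) * c = N / ((c * K) * B * K)" by (simp add: field_simps)

lemma alg1: "(N::real) \<noteq> 0 \<Longrightarrow> a + 1 \<noteq> 0 \<Longrightarrow>
  X*a/(a+1) + X*(N-2*a)/N*a/(a+1) = 2/N*(X*(a*(N-a))/(a+1))"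
proof -
  assume N: "N \<noteq> 0" and a: "a + 1 \<noteq> 0"
  have "X*a/(a+1) + X*(N-2*a)/N*a/(a+1) = (X*a*N + X*(N-2*a)*a)/(N*(a+1))"
    using N a by (simp add: add_divide_distrib)
  also have "X*a*N + X*(N-2*a)*a = 2*(X*(a*(N-a)))" by (simp add: algebra_simps)
  also have "2*(X*(a*(N-a)))/(N*(a+1)) = 2/N*(X*(a*(N-a))/(a+1))" by simp
  finally show ?thesis .
qed

lemma fact_id1:
  assumes "2 * i \<le> n"
  shows "real (n choose (i+1)) * real ((n-i-1) choose (n-2*i)) * (real i + 1) = W n i * real i"
proof (cases i)
  case 0 thus ?thesis by (cases n) (simp_all add: W_def)
next
  case (Suc k)
  have a: "i + 1 \<le> n" "n - 2*i \<le> n-i-1" "i \<le> n" "i \<le> n - i" using assms Suc by auto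
  have b: "n - i - 1 - (n - 2*i) = k" "n - (i+1) = n - i - 1" "n - i - i = n - 2*i" using assms Suc by auto
  have f1: "fact (i+1) = (real i + 1) * fact i" by simp
  have f2: "fact i = real i * fact k" using Suc by simp
  have gen: "\<And>N F A B K. (F::real) > 0 \<Longrightarrow> A > 0 \<Longrightarrow> B > 0 \<Longrightarrow> K > 0 \<Longrightarrow>
     N / (((real i + 1) * F) * A) * (A / (B * K)) * (real i + 1) = N / (F * B * K)"
    by (rule frac1) auto
  have gen2: "\<And>N F A B K. (K::real) > 0 \<Longrightarrow> A > 0 \<Longrightarrow> B > 0 \<Longrightarrow>
     N / ((real i * K) * A) * (A / ((real i * K) * B)) * real i = N / ((real i * K) * B * K)"
    using Suc by (intro frac3) auto
  have "real (n choose (i+1)) * real ((n-i-1) choose (n-2*i)) * (real i + 1) =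
     fact n / (fact (i+1) * fact (n-i-1)) * (fact (n-i-1) / (fact (n-2*i) * fact k)) * (real i + 1)"
    using a b by (simp add: binomial_fact)
  also have "\<dots> = fact n / (fact i * fact (n-2*i) * fact k)"
    unfolding f1 by (rule gen) auto
  finally have L: "real (n choose (i+1)) * real ((n-i-1) choose (n-2*i)) * (real i + 1) = fact n / (fact i * fact (n-2*i) * fact k)" .
  have "W n i * real i = fact n / (fact i * fact (n-i)) * (fact (n-i) / (fact i * fact (n-2*i))) * real i"
    using a b by (simp add: W_def binomial_fact)
  also have "\<dots> = fact n / (fact i * fact (n-2*i) * fact k)"
    unfolding f2 by (rule gen2) auto
  finally show ?thesis using L by simp
qed

lemma fact_id2:
  assumes "n \<ge> 1"
  shows "W (n-1) i * real n = W n i * (real n - 2 * real i)"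
proof (cases "2 * i \<le> n - 1")
  case False
  hence "W (n-1) i = 0" by (intro W_zero) auto
  moreover have "W n i = 0 \<or> real n - 2 * real i = 0"
  proof (cases "2 * i = n")
    case True thus ?thesis by simp
  next
    case False thus ?thesis using \<open>\<not> 2 * i \<le> n - 1\<close> by (intro disjI1 W_zero) auto
  qed
  ultimately show ?thesis by auto
next
  case True
  define r where "r = n - 2*i - 1"
  have r: "n - 2*i = Suc r" using True assms unfolding r_def by arith
  have a: "i \<le> n - 1" "i \<le> n - 1 - i" "i \<le> n" "i \<le> n - i" using True by auto
  have b: "n - 1 - i - i = r" "n - i - i = Suc r" using r by auto
  have rn: "real n - 2 * real i = real (Suc r)" using r True by linarith
  have fn: "fact n = real n * fact (n - 1)" using assms by (metis Suc_diff_1 fact_Suc less_le_trans of_nat_fact zero_less_one of_nat_mult)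
  have gen: "\<And>N F A B K. (F::real) > 0 \<Longrightarrow> A > 0 \<Longrightarrow> K > 0 \<Longrightarrow>
     F / (B * A) * (A / (B * K)) * real n = (real n * F) / (B * B * K)" by (simp add: field_simps)
  have gen2: "\<And>N A B K. (A::real) > 0 \<Longrightarrow> K > 0 \<Longrightarrow> B > 0 \<Longrightarrow>
     N / (B * A) * (A / (B * (real (Suc r) * K))) * real (Suc r) = N / (B * B * K)"
    by (rule frac2) auto
  have "W (n-1) i * real n = fact (n-1) / (fact i * fact (n-1-i)) * (fact (n-1-i) / (fact i * fact r)) * real n"
    using a b by (simp add: W_def binomial_fact)
  also have "\<dots> = fact n / (fact i * fact i * fact r)" unfolding fn by (rule gen) auto
  finally have L: "W (n-1) i * real n = fact n / (fact i * fact i * fact r)" .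
  have "W n i * (real n - 2 * real i) = fact n / (fact i * fact (n-i)) * (fact (n-i) / (fact i * fact (Suc r))) * real (Suc r)"
    using a b rn by (simp add: W_def binomial_fact)
  also have "\<dots> = fact n / (fact i * fact i * fact r)" unfolding fact_Suc of_nat_mult by (rule gen2) auto
  finally show ?thesis using L by simp
qed

lemma trinom_n2: "real (trinom n (n+2)) = (\<Sum>i\<le>n. W n i * real i / (real i + 1))"
proof (cases n)
  case 0 thus ?thesis by (simp add: trinom_def W_def)
next
  case (Suc m)
  define f where "f j = (n choose j) * (if 2*j \<le> Suc (Suc n) then (n-j) choose (Suc (Suc n) - 2*j) else 0)" for j
  have "real (trinom n (n+2)) = real (\<Sum>j\<le>n. f j)" by (simp add: trinom_sum f_def)
  also have "\<dots> = real (\<Sum>j\<le>Suc m. f j)" using Suc by simp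
  also have "\<dots> = real (f 0) + (\<Sum>i\<le>m. real (f (Suc i)))" by (simp only: sum.atMost_Suc_shift of_nat_add of_nat_sum)
  also have "real (f 0) = 0" by (simp add: f_def)
  also have "(\<Sum>i\<le>m. real (f (Suc i))) = (\<Sum>i\<le>m. W n i * real i / (real i + 1))"
  proof (rule sum.cong[OF refl])
    fix i assume "i \<in> {..m}"
    show "real (f (Suc i)) = W n i * real i / (real i + 1)"
    proof (cases "2 * i \<le> n")
      case True
      have e: "Suc (Suc n) - 2 * Suc i = n - 2*i" "n - Suc i = n - i - 1" by auto
      have c: "2 * Suc i \<le> Suc (Suc n)" using True by simp
      have "f (Suc i) = (n choose Suc i) * ((n - Suc i) choose (Suc (Suc n) - 2 * Suc i))"
        unfolding f_def by (simp only: if_P[OF c])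
      also have "\<dots> = (n choose (Suc i)) * ((n-i-1) choose (n-2*i))" by (simp only: e Suc_eq_plus1[symmetric])
      finally have "real (f (Suc i)) = real (n choose (i+1)) * real ((n-i-1) choose (n-2*i))" by simp
      moreover have "real i + 1 \<noteq> 0" by simp
      ultimately show ?thesis using fact_id1[OF True] by (simp add: eq_divide_eq)
    next
      case False thus ?thesis by (simp add: f_def W_zero)
    qed
  qed
  also have "(\<Sum>i\<le>m. W n i * real i / (real i + 1)) = (\<Sum>i\<le>n. W n i * real i / (real i + 1))"
    using Suc by (simp add: W_def)
  finally show ?thesis by simp
qed

theorem part_iii: "\<forall>n\<ge>1. real (ellM n) = 2 / real n *
            (\<Sum>k=0..n div 2. real (n choose k) * real ((n - k) choose k)
                 * (real k * real (n - k)) / (real k + 1))"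
proof (intro allI impI)
  fix n :: nat assume n1: "n \<ge> 1"
  then obtain m where n: "n = Suc m" by (cases n) auto
  have "real (ellM n) = real_of_int (aa n 2 + aa m 2)"
    using arg_cong[OF ellM_Suc[of m], of real_of_int] n by simp
  also have "\<dots> = real (trinom n (n+2)) + real (trinom m (m+2))"
  proof -
    have "\<And>k::nat. nat (int k + 2) = k + 2" by simp
    thus ?thesis by (simp add: aa_def)
  qed
  also have "\<dots> = (\<Sum>i\<le>n. W n i * real i / (real i + 1)) + (\<Sum>i\<le>n. W m i * real i / (real i + 1))"
  proof -
    have "(\<Sum>i\<le>n. W m i * real i / (real i + 1)) = (\<Sum>i\<le>m. W m i * real i / (real i + 1))"
      using n by (simp add: W_def)
    thus ?thesis using trinom_n2[of n] trinom_n2[of m] by simp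
  qed
  also have "\<dots> = (\<Sum>i\<le>n. 2 / real n * (W n i * (real i * real (n - i)) / (real i + 1)))"
    unfolding sum.distrib[symmetric]
  proof (rule sum.cong[OF refl])
    fix i assume i: "i \<in> {..n}"
    have Wm: "W m i = W n i * (real n - 2 * real i) / real n" using fact_id2[OF n1, of i] n n1
      by (simp add: field_simps)
    have ni: "real (n - i) = real n - real i" using i by (simp add: of_nat_diff)
    have np: "real n > 0" using n1 by simp
    show "W n i * real i / (real i + 1) + W m i * real i / (real i + 1) =
          2 / real n * (W n i * (real i * real (n - i)) / (real i + 1))"
      unfolding Wm ni using np by (intro alg1) auto
  qed
  also have "\<dots> = 2 / real n * (\<Sum>i\<le>n. W n i * (real i * real (n - i)) / (real i + 1))"
    by (simp add: sum_distrib_left)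
  also have "(\<Sum>i\<le>n. W n i * (real i * real (n - i)) / (real i + 1)) =
      (\<Sum>k=0..n div 2. W n k * (real k * real (n - k)) / (real k + 1))"
  proof (rule sum.mono_neutral_right)
    show "{0..n div 2} \<subseteq> {..n}" by auto
    show "\<forall>i\<in>{..n} - {0..n div 2}. W n i * (real i * real (n - i)) / (real i + 1) = 0"
    proof
      fix i assume "i \<in> {..n} - {0..n div 2}"
      hence "2 * i > n" by auto
      thus "W n i * (real i * real (n - i)) / (real i + 1) = 0" by (simp add: W_zero)
    qed
  qed simp
  finally show "real (ellM n) = 2 / real n *
            (\<Sum>k=0..n div 2. real (n choose k) * real ((n - k) choose k)
                 * (real k * real (n - k)) / (real k + 1))" by (simp add: W_def)
qed

lemma aa_le: "aa n h \<le> 3 ^ n"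
proof (induction n arbitrary: h)
  case 0 thus ?case by (simp add: aa_0)
next
  case (Suc n)
  have "aa n (h - 1) \<le> 3^n" "aa n h \<le> 3^n" "aa n (h + 1) \<le> 3^n" using Suc by auto
  thus ?case by (simp add: aa_Suc)
qed

lemma aa_rec_B: "int (n+2) * aa (n+2) 0 = int (2*n+3) * aa (n+1) 0 + 3 * int (n+1) * aa n 0"
proof -
  define a0 a1 a2 b0 b1 c0 where "a0 = aa n 0" "a1 = aa n 1" "a2 = aa n 2"
    "b0 = aa (n+1) 0" "b1 = aa (n+1) 1" "c0 = aa (n+2) 0"
  have s1: "aa n (-1) = a1" "aa (n+1) (-1) = b1" using aa_sym[of n 1] aa_sym[of "n+1" 1] a0_a1_a2_b0_b1_c0_def by auto
  have r1: "b0 = a0 + 2 * a1" using aa_Suc[of n 0] s1 a0_a1_a2_b0_b1_c0_def by simp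
  have r2: "b1 = a0 + a1 + a2" using aa_Suc[of n 1] a0_a1_a2_b0_b1_c0_def by simp
  have r3: "c0 = b0 + 2 * b1" using aa_Suc[of "n+1" 0] s1 a0_a1_a2_b0_b1_c0_def by simp
  have e: "b1 = int (n+1) * (a0 - a2)" using aa_E[of 1 n] a0_a1_a2_b0_b1_c0_def by simp
  have k: "int (n+2) * b1 = int (n+1) * (2 * a0 + a1)"
  proof -
    have "int (n+1) * b1 = int (n+1) * (a0 + a1) + int (n+1) * a0 - b1"
      using r2 e by (simp add: algebra_simps)
    thus ?thesis by (simp add: algebra_simps)
  qed
  have "int (n+2) * c0 = int (n+2) * b0 + 2 * (int (n+2) * b1)" using r3 by (simp add: algebra_simps)
  also have "\<dots> = int (2*n+3) * b0 + 3 * int (n+1) * a0" using k r1 by (simp add: algebra_simps)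
  finally show ?thesis using a0_a1_a2_b0_b1_c0_def by simp
qed

lemma aa2_via_T: "2 * aa n 2 = aa (n+2) 0 - 2 * aa (n+1) 0 - aa n 0"
proof -
  have s1: "aa n (-1) = aa n 1" "aa (n+1) (-1) = aa (n+1) 1" using aa_sym[of n 1] aa_sym[of "n+1" 1] by auto
  show ?thesis using aa_Suc[of n 0] aa_Suc[of n 1] aa_Suc[of "n+1" 0] s1 by simp
qed

lemma aa1_via_T: "2 * aa (n+1) 1 = aa (n+2) 0 - aa (n+1) 0"
proof -
  have s1: "aa (n+1) (-1) = aa (n+1) 1" using aa_sym[of "n+1" 1] by auto
  show ?thesis using aa_Suc[of "n+1" 0] s1 by simp
qed

definition tt :: "nat \<Rightarrow> real" where "tt n = real_of_int (aa n 0)"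

definition FT :: "real fps" where "FT = Abs_fps tt"

definition AP :: "real fps" where "AP = fps_of_poly [:1, -2, -3:]"

lemma AP_eq: "AP = 1 - fps_const 2 * fps_X - fps_const 3 * fps_X ^ 2"
  by (rule fps_ext) (auto simp: AP_def coeff_pCons' fps_X_power_mult_nth numeral_2_eq_2)

lemma tt_0: "tt 0 = 1" by (simp add: tt_def aa_0)
lemma tt_1: "tt 1 = 1" using aa_Suc[of 0 0] by (simp add: tt_def aa_0)

lemma tt_rec: "real (n+2) * tt (n+2) = real (2*n+3) * tt (n+1) + 3 * real (n+1) * tt n"
proof -
  have "real_of_int (int (n+2) * aa (n+2) 0) = real_of_int (int (2*n+3) * aa (n+1) 0 + 3 * int (n+1) * aa n 0)"
    using aa_rec_B[of n] by simp
  thus ?thesis by (simp add: tt_def)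
qed

lemma AP_mult_nth: "fps_nth (AP * G) n = fps_nth G n - 2 * (if n = 0 then 0 else fps_nth G (n - 1)) - 3 * (if n < 2 then 0 else fps_nth G (n - 2))"
proof -
  have "AP * G = G - fps_const 2 * (fps_X * G) - fps_const 3 * (fps_X ^ 2 * G)"
    unfolding AP_eq by (simp add: algebra_simps)
  thus ?thesis by (simp add: fps_X_power_mult_nth)
qed

lemma FT_ode: "AP * fps_deriv FT = (1 + fps_const 3 * fps_X) * FT"
proof (rule fps_ext)
  fix n
  have r: "fps_nth ((1 + fps_const 3 * fps_X) * FT) n = tt n + 3 * (if n = 0 then 0 else tt (n - 1))"
    by (simp add: algebra_simps FT_def)
  show "fps_nth (AP * fps_deriv FT) n = fps_nth ((1 + fps_const 3 * fps_X) * FT) n"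
  proof (cases n)
    case 0 thus ?thesis using tt_0 tt_1 r by (simp add: AP_mult_nth FT_def AP_def)
  next
    case (Suc m)
    have "fps_nth (AP * fps_deriv FT) n = real (m+2) * tt (m+2) - 2 * (real (m+1) * tt (m+1)) - 3 * real m * tt m"
    proof (cases m)
      case 0 thus ?thesis using Suc by (simp add: AP_mult_nth FT_def algebra_simps AP_def)
    next
      case (Suc k) thus ?thesis using \<open>n = Suc m\<close> by (simp add: AP_mult_nth FT_def algebra_simps)
    qed
    also have "\<dots> = tt (m+1) + 3 * tt m" using tt_rec[of m] by (simp add: algebra_simps)
    finally show ?thesis using r Suc by simp
  qed
qed

lemma AP_deriv0: "fps_deriv AP = fps_const (-2) + fps_const (-6) * fps_X"
  by (rule fps_ext) (auto simp: AP_def coeff_pCons' numeral_2_eq_2)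

lemma AP_deriv: "fps_deriv AP = - (2 * (1 + fps_const 3 * fps_X))"
  unfolding AP_deriv0 by (simp add: fps_numeral_fps_const algebra_simps)

lemma FT_sq: "AP * FT * FT = 1"
proof -
  let ?Q = "AP * FT * FT"
  have "fps_deriv ?Q = 2 * FT * (AP * fps_deriv FT) + fps_deriv AP * FT * FT"
    by (simp add: algebra_simps)
  also have "\<dots> = 0" unfolding FT_ode AP_deriv by (simp add: algebra_simps)
  finally have "fps_deriv ?Q = 0" .
  hence "?Q = fps_const (fps_nth ?Q 0)" by (simp only: fps_deriv_eq_0_iff)
  also have "fps_nth ?Q 0 = 1" using tt_0 by (simp add: AP_def FT_def)
  finally show ?thesis by simp
qed

lemma tt_nonneg: "tt n \<ge> 0" by (simp add: tt_def aa_nonneg)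
lemma tt_le: "tt n \<le> 3 ^ n"
proof -
  have "real_of_int (aa n 0) \<le> real_of_int (3 ^ n)" using aa_le[of n 0] by linarith
  thus ?thesis by (simp add: tt_def)
qed

lemma tt_summable: assumes "\<bar>x\<bar> < 1/3" shows "summable (\<lambda>n. tt n * x ^ n)"
proof (rule summable_comparison_test)
  show "\<exists>N. \<forall>n\<ge>N. norm (tt n * x ^ n) \<le> (3 * \<bar>x\<bar>) ^ n"
  proof (intro exI allI impI)
    fix n :: nat
    have "norm (tt n * x ^ n) = tt n * \<bar>x\<bar> ^ n" using tt_nonneg by (simp add: abs_mult power_abs)
    also have "\<dots> \<le> 3 ^ n * \<bar>x\<bar> ^ n" by (intro mult_right_mono tt_le) simp
    finally show "norm (tt n * x ^ n) \<le> (3 * \<bar>x\<bar>) ^ n" by (simp add: power_mult_distrib)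
  qed
  show "summable (\<lambda>n. (3 * \<bar>x\<bar>) ^ n)" using assms by (intro summable_geometric) simp
qed

lemma FT_radius: "fps_conv_radius FT \<ge> ereal (1/3)"
proof -
  have "conv_radius tt \<ge> ereal (1/3)"
  proof (rule conv_radius_geI_ex')
    fix r :: real assume "0 < r" "ereal r < ereal (1/3)"
    hence "\<bar>r\<bar> < 1/3" by simp
    thus "summable (\<lambda>n. tt n * of_real r ^ n)" using tt_summable by simp
  qed
  thus ?thesis by (simp add: fps_conv_radius_def FT_def)
qed

lemma FT_rad_lt: "\<bar>y::real\<bar> < 1/3 \<Longrightarrow> ereal (norm y) < fps_conv_radius FT"
proof -
  assume "\<bar>y\<bar> < 1/3"
  hence "ereal (norm y) < ereal (1/3)" by simp
  thus ?thesis using FT_radius by (rule less_le_trans)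
qed

lemma AP_radius: "fps_conv_radius AP = \<infinity>" by (simp add: AP_def)

lemma eval_AP: "eval_fps AP y = 1 - 2*y - 3*y^2"
  by (simp add: AP_def algebra_simps power2_eq_square)

lemma FT_eval_sq:
  assumes "\<bar>y\<bar> < 1/3"
  shows "(1 - 2*y - 3*y^2) * (eval_fps FT y * eval_fps FT y) = 1"
proof -
  have r1: "ereal (norm y) < fps_conv_radius FT" using FT_rad_lt[OF assms] .
  have r0: "ereal (norm y) < fps_conv_radius AP" by (simp add: AP_radius)
  have r2: "ereal (norm y) < fps_conv_radius (AP * FT)"
  proof -
    have "ereal (norm y) < min (fps_conv_radius AP) (fps_conv_radius FT)" using r0 r1 by simp
    thus ?thesis using fps_conv_radius_mult[of AP FT] by (rule less_le_trans)
  qed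
  have "1 = eval_fps (AP * FT * FT) y" using FT_sq by simp
  also have "\<dots> = eval_fps (AP * FT) y * eval_fps FT y" using r1 r2 by (intro eval_fps_mult) auto
  also have "eval_fps (AP * FT) y = eval_fps AP y * eval_fps FT y" using r0 r1 by (intro eval_fps_mult) auto
  finally show ?thesis by (simp add: eval_AP mult.assoc)
qed

lemma FT_eval_pos:
  assumes "\<bar>y\<bar> < 1/3"
  shows "eval_fps FT y > 0"
proof (rule ccontr)
  assume "\<not> eval_fps FT y > 0"
  hence neg: "eval_fps FT y \<le> 0" by simp
  have f0: "eval_fps FT 0 = 1" using tt_0 by (simp add: eval_fps_at_0 FT_def)
  have cont: "continuous_on {a..b} (eval_fps FT)" if "\<bar>a\<bar> < 1/3" "\<bar>b\<bar> < 1/3" for a b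
  proof -
    have "{a..b} \<subseteq> eball 0 (fps_conv_radius FT)"
    proof
      fix z assume "z \<in> {a..b}"
      hence "\<bar>z\<bar> < 1/3" using that by auto
      thus "z \<in> eball 0 (fps_conv_radius FT)" using FT_rad_lt[of z] by (simp add: dist_norm)
    qed
    thus ?thesis using continuous_on_eval_fps continuous_on_subset by blast
  qed
  obtain z where z: "\<bar>z\<bar> < 1/3" "eval_fps FT z = 0"
  proof (cases "y \<le> 0")
    case True
    obtain z where "y \<le> z" "z \<le> 0" "eval_fps FT z = 0"
      using IVT'[of "eval_fps FT" y 0 0] neg f0 True cont[of y 0] assms by auto
    moreover have "\<bar>z\<bar> < 1/3" using \<open>y \<le> z\<close> \<open>z \<le> 0\<close> assms by (smt (verit))
    ultimately show ?thesis using that by blast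
  next
    case False
    obtain z where "0 \<le> z" "z \<le> y" "eval_fps FT z = 0"
      using IVT2'[of "eval_fps FT" y 0 0] neg f0 False cont[of 0 y] assms by auto
    moreover have "\<bar>z\<bar> < 1/3" using \<open>0 \<le> z\<close> \<open>z \<le> y\<close> assms by (smt (verit))
    ultimately show ?thesis using that by blast
  qed
  thus False using FT_eval_sq[of z] by simp
qed

lemma tt_sums:
  assumes "\<bar>x\<bar> < 1/3"
  shows "(\<lambda>n. tt n * x ^ n) sums (1 / sqrt (1 - 2*x - 3*x^2))"
proof -
  have r1: "ereal (norm x) < fps_conv_radius FT" using FT_rad_lt[OF assms] .
  have s: "(\<lambda>n. tt n * x ^ n) sums eval_fps FT x" using sums_eval_fps[OF r1] by (simp add: FT_def)
  define f where "f = eval_fps FT x"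
  have fp: "f > 0" using FT_eval_pos[OF assms] by (simp add: f_def)
  have sq: "(1 - 2*x - 3*x^2) * (f * f) = 1" using FT_eval_sq[OF assms] by (simp add: f_def)
  have Rp: "1 - 2*x - 3*x^2 > 0"
  proof -
    have "1 - 2*x - 3*x^2 = (1 - 3*x) * (1 + x)" by (simp add: algebra_simps power2_eq_square)
    moreover have "1 - 3*x > 0" "1 + x > 0" using assms by auto
    ultimately show ?thesis by simp
  qed
  have "f * f = 1 / (1 - 2*x - 3*x^2)" using sq Rp by (subst eq_divide_eq) (auto simp: mult.commute)
  hence "sqrt (1 / (1 - 2*x - 3*x^2)) = f" using fp by (intro real_sqrt_unique) (auto simp: power2_eq_square)
  hence "f = sqrt (1 / (1 - 2*x - 3*x^2))" by simp
  hence "f = 1 / sqrt (1 - 2*x - 3*x^2)" by (simp add: real_sqrt_divide)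
  thus ?thesis using s by (simp add: f_def)
qed

definition dd :: "nat \<Rightarrow> real" where "dd n = real_of_int (aa n 2)"

lemma dd_T: "dd n = (tt (n+2) - 2 * tt (n+1) - tt n) / 2"
proof -
  have "real_of_int (2 * aa n 2) = real_of_int (aa (n+2) 0 - 2 * aa (n+1) 0 - aa n 0)"
    using aa2_via_T[of n] by simp
  thus ?thesis by (simp add: dd_def tt_def)
qed

lemma ellM_dd: "real (ellM n) = dd n + (if n = 0 then 0 else dd (n - 1))"
proof (cases n)
  case 0 thus ?thesis by (simp add: ellM_0 dd_def aa_vanish)
next
  case (Suc m)
  have "real_of_int (int (ellM (Suc m))) = real_of_int (aa (Suc m) 2 + aa m 2)" using ellM_Suc[of m] by simp
  thus ?thesis using Suc by (simp add: dd_def)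
qed

lemma gf_alg:
  assumes "(x::real) \<noteq> 0" "R > 0"
  shows "(1 + x) * (((1/R - 1 - x) / x^2 - 2 * ((1/R - 1) / x) - 1/R) / 2) =
         (1 + x) * (1 - 2*x - x^2 - (1 - x) * R) / (2 * x^2 * R)"
proof -
  have "((1/R - 1 - x) / x^2 - 2 * ((1/R - 1) / x) - 1/R) / 2 = (1 - 2*x - x^2 - (1 - x) * R) / (2 * x^2 * R)"
    using assms by (simp add: field_simps power2_eq_square)
  thus ?thesis by (simp only: times_divide_eq_right)
qed

theorem part_gf: "\<forall>x::real. 0 < \<bar>x\<bar> \<and> \<bar>x\<bar> < 1/3 \<longrightarrow>
            summable (\<lambda>n. real (ellM n) * x ^ n) \<and>
            (\<Sum>n. real (ellM n) * x ^ n) =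
              (1 + x) * (1 - 2*x - x^2 - (1 - x) * sqrt (1 - 2*x - 3*x^2))
              / (2 * x^2 * sqrt (1 - 2*x - 3*x^2))"
proof (intro allI impI)
  fix x :: real assume asm: "0 < \<bar>x\<bar> \<and> \<bar>x\<bar> < 1/3"
  hence x0: "x \<noteq> 0" and x3: "\<bar>x\<bar> < 1/3" by auto
  define R where "R = sqrt (1 - 2*x - 3*x^2)"
  have Rp: "R > 0"
  proof -
    have "1 - 2*x - 3*x^2 = (1 - 3*x) * (1 + x)" by (simp add: algebra_simps power2_eq_square)
    moreover have "1 - 3*x > 0" "1 + x > 0" using x3 by auto
    ultimately show ?thesis by (simp add: R_def)
  qed
  define f where "f = 1 / R"
  define a where "a = (\<lambda>n. tt n * x ^ n)"
  have s0: "a sums f" using tt_sums[OF x3] by (simp add: a_def f_def R_def)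
  have a0: "a 0 = 1" by (simp add: a_def tt_0)
  have a1: "a (Suc 0) = x" using tt_1 by (simp add: a_def)
  have s1: "(\<lambda>n. a (Suc n)) sums (f - 1)" by (subst sums_Suc_iff) (simp add: a0 s0)
  have s2: "(\<lambda>n. a (Suc (Suc n))) sums (f - 1 - x)" by (subst sums_Suc_iff) (simp add: a1 s1)
  define D where "D = ((f - 1 - x) / x^2 - 2 * ((f - 1) / x) - f) / 2"
  have sd: "(\<lambda>n. dd n * x ^ n) sums D"
  proof -
    have "(\<lambda>n. (a (Suc (Suc n)) / x^2 - 2 * (a (Suc n) / x) - a n) / 2) sums D"
      unfolding D_def by (intro sums_divide sums_diff sums_mult s0 s1 s2) 
    moreover have "(a (Suc (Suc n)) / x^2 - 2 * (a (Suc n) / x) - a n) / 2 = dd n * x ^ n" for n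
      using x0 by (simp add: a_def dd_T field_simps power2_eq_square)
    ultimately show ?thesis by simp
  qed
  define g where "g = (\<lambda>n. if n = 0 then 0 else dd (n - 1) * x ^ n)"
  have sg: "g sums (x * D)"
  proof -
    have "(\<lambda>n. g (Suc n)) sums (x * D)"
      using sums_mult[OF sd, of x] by (simp add: g_def algebra_simps)
    thus ?thesis by (subst (asm) sums_Suc_iff) (simp add: g_def)
  qed
  have se: "(\<lambda>n. real (ellM n) * x ^ n) sums (D + x * D)"
  proof -
    have "(\<lambda>n. dd n * x ^ n + g n) sums (D + x * D)" by (rule sums_add[OF sd sg])
    moreover have "dd n * x ^ n + g n = real (ellM n) * x ^ n" for n
      by (simp add: ellM_dd g_def algebra_simps)
    ultimately show ?thesis by simp
  qed
  have "D + x * D = (1 + x) * D" by (simp add: algebra_simps)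
  also have "\<dots> = (1 + x) * (1 - 2*x - x^2 - (1 - x) * R) / (2 * x^2 * R)"
    using gf_alg[OF x0 Rp] unfolding D_def f_def .
  finally have "D + x * D = (1 + x) * (1 - 2*x - x^2 - (1 - x) * R) / (2 * x^2 * R)" .
  thus "summable (\<lambda>n. real (ellM n) * x ^ n) \<and>
            (\<Sum>n. real (ellM n) * x ^ n) =
              (1 + x) * (1 - 2*x - x^2 - (1 - x) * sqrt (1 - 2*x - 3*x^2))
              / (2 * x^2 * sqrt (1 - 2*x - 3*x^2))"
    using se by (simp add: sums_iff R_def)
qed

declare binomial_Suc_Suc [simp del]

definition bb :: "nat \<Rightarrow> real" where "bb k = real ((2*k) choose k) / 4 ^ k"

lemma bb_pos: "bb k > 0" by (simp add: bb_def)

lemma bbr: "bb (Suc k) * (2 * real k + 2) = bb k * (2 * real k + 1)"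
proof -
  have n1: "Suc (2*k) * ((2*k) choose k) = (Suc (2*k) choose Suc k) * Suc k" by (rule Suc_times_binomial_eq)
  have n2: "Suc (Suc (2*k)) * (Suc (2*k) choose k) = (Suc (Suc (2*k)) choose Suc k) * Suc k" by (rule Suc_times_binomial_eq)
  have n3: "Suc (2*k) choose Suc k = Suc (2*k) choose k"
    using binomial_symmetric[of "Suc k" "Suc (2*k)"] by simp
  have e: "2 * Suc k = Suc (Suc (2*k))" by simp
  have m2: "real ((2 * Suc k) choose Suc k) * real (Suc k) = real (Suc (Suc (2*k))) * real (Suc (2*k) choose k)"
    unfolding e using arg_cong[OF n2, of real] by (simp only: of_nat_mult)
  have m1: "real (Suc (2*k) choose k) * real (Suc k) = real (Suc (2*k)) * real ((2*k) choose k)"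
    using arg_cong[OF n1, of real] n3 by (simp only: of_nat_mult)
  define C' where "C' = real ((2 * Suc k) choose Suc k)"
  define C where "C = real ((2*k) choose k)"
  define D where "D = real (Suc (2*k) choose k)"
  have m2': "C' * (real k + 1) = (2 * real k + 2) * D" using m2 unfolding C'_def D_def by (simp add: algebra_simps)
  have m1': "D * (real k + 1) = (2 * real k + 1) * C" using m1 unfolding C_def D_def by (simp add: algebra_simps)
  have "C' * (real k + 1) * (real k + 1) = (2 * real k + 2) * (2 * real k + 1) * C"
    using m2' m1' by (metis mult.assoc mult.commute)
  also have "(2 * real k + 2) * (2 * real k + 1) * C = (2 * (2 * real k + 1) * C) * (real k + 1)"
    by (simp add: algebra_simps)
  finally have "C' * (real k + 1) * (real k + 1) = (2 * (2 * real k + 1) * C) * (real k + 1)" .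
  hence "C' * (real k + 1) = 2 * (2 * real k + 1) * C"
    by (subst (asm) mult_right_cancel) auto
  hence "C' * (2 * real k + 2) = 4 * ((2 * real k + 1) * C)" by (simp add: algebra_simps)
  hence "C' / 4 ^ Suc k * (2 * real k + 2) = C / 4 ^ k * (2 * real k + 1)" by (simp add: field_simps)
  thus ?thesis by (simp add: bb_def C'_def C_def)
qed

lemma bb_sq: "(bb (Suc k) * (2 * real k + 2))^2 = (bb k * (2 * real k + 1))^2"
  using bbr by simp

lemma bb_le1: "bb k \<le> 1"
proof (induction k)
  case 0 thus ?case by (simp add: bb_def)
next
  case (Suc k)
  have "bb (Suc k) * (2 * real k + 2) = bb k * (2 * real k + 1)" by (rule bbr)
  also have "\<dots> \<le> 1 * (2 * real k + 2)" using Suc bb_pos[of k] by (intro mult_mono) auto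
  finally show ?case by (subst (asm) mult_le_cancel_right_pos) auto
qed

definition WP :: "nat \<Rightarrow> real" where "WP n = (\<Prod>k = 1..n. 4 * (real k)\<^sup>2 / (4 * (real k)\<^sup>2 - 1))"

lemma alg_w: "(a::real) \<noteq> 0 \<Longrightarrow> c \<noteq> 0 \<Longrightarrow> b^2*B^2 = a^2*A^2 \<Longrightarrow> b^2/(a*c) * (c*B^2) = a*A^2"
proof -
  assume a: "a \<noteq> 0" and c: "c \<noteq> 0" and h: "b^2*B^2 = a^2*A^2"
  have "b^2/(a*c) * (c*B^2) = (b^2*B^2) / a" using a c by (simp add: field_simps)
  also have "\<dots> = a*A^2" using a h by (simp add: power2_eq_square)
  finally show ?thesis .
qed

lemma WP_bb: "WP k * ((2 * real k + 1) * bb k ^ 2) = 1"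
proof (induction k)
  case 0 thus ?case by (simp add: WP_def bb_def)
next
  case (Suc k)
  have f1: "4 * (1 + real k)\<^sup>2 = (2 * real k + 2)^2" by (simp add: power2_eq_square algebra_simps)
  have f2: "(2 * real k + 2)^2 - 1 = (2 * real k + 1) * (2 * real k + 3)" by (simp add: power2_eq_square algebra_simps)
  have WS: "WP (Suc k) = WP k * ((2 * real k + 2)^2 / ((2 * real k + 1) * (2 * real k + 3)))"
    unfolding WP_def by (simp add: f1 f2)
  have h: "(2 * real k + 2)^2 * bb (Suc k)^2 = (2 * real k + 1)^2 * bb k ^2"
    using bb_sq[of k] by (simp add: power_mult_distrib mult.commute)
  have "(2 * real k + 2)^2 / ((2 * real k + 1) * (2 * real k + 3)) * ((2 * real k + 3) * bb (Suc k)^2)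
     = (2 * real k + 1) * bb k ^ 2"
    by (rule alg_w[OF _ _ h]) auto
  hence A: "(2 * real k + 2)^2 / ((2 * real k + 1) * (2 * real k + 3)) * ((2 * real k + 3) * bb (Suc k)^2)
     = (2 * real k + 1) * bb k ^ 2" .
  have e3: "2 * real (Suc k) + 1 = 2 * real k + 3" by simp
  have "WP (Suc k) * ((2 * real (Suc k) + 1) * bb (Suc k) ^ 2) =
     WP k * ((2 * real k + 2)^2 / ((2 * real k + 1) * (2 * real k + 3)) * ((2 * real k + 3) * bb (Suc k)^2))"
    unfolding WS e3 by (simp only: mult.assoc)
  also have "\<dots> = 1" unfolding A using Suc .
  finally show ?case .
qed

definition cc :: "nat \<Rightarrow> real" where "cc k = (2 * real k + 1) * bb k ^ 2"

lemma cc_lim: "cc \<longlonglongrightarrow> 2 / pi"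
proof -
  have "(\<lambda>k. inverse (WP k)) \<longlonglongrightarrow> inverse (pi / 2)"
    using wallis unfolding WP_def by (intro tendsto_inverse) auto
  moreover have "inverse (WP k) = cc k" for k using WP_bb[of k] unfolding cc_def
    by (metis inverse_unique)
  ultimately show ?thesis by simp
qed

lemma cc_dec: "decseq cc"
proof (rule decseq_SucI)
  fix k
  have p: "(2 * real k + 2)^2 > 0" by simp
  have "(2 * real k + 2)^2 * cc (Suc k) = (2 * real k + 3) * (bb (Suc k) * (2 * real k + 2))^2"
    by (simp add: cc_def power2_eq_square algebra_simps)
  also have "\<dots> = ((2 * real k + 3) * (2 * real k + 1)) * ((2 * real k + 1) * bb k ^ 2)"
    unfolding bb_sq by (simp add: power2_eq_square algebra_simps)
  also have "\<dots> \<le> (2 * real k + 2)^2 * ((2 * real k + 1) * bb k ^ 2)"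
    by (intro mult_right_mono) (auto simp: power2_eq_square algebra_simps)
  finally show "cc (Suc k) \<le> cc k" unfolding cc_def[of k] using p by (simp only: mult_le_cancel_left_pos)
qed

lemma bb_lower: "bb k ^ 2 \<ge> 2 / (pi * (2 * real k + 1))"
proof -
  have "2 / pi \<le> cc k" using decseq_ge[OF cc_dec cc_lim] .
  hence "(2 / pi) / (2 * real k + 1) \<le> bb k ^ 2" unfolding cc_def by (subst pos_divide_le_eq) (auto simp: mult.commute)
  thus ?thesis by (simp add: field_simps)
qed

definition ee :: "nat \<Rightarrow> real" where "ee k = (2 * real k + 2) * bb (Suc k) ^ 2"

lemma ee_inc: "incseq ee"
proof (rule incseq_SucI)
  fix k
  have p: "2 * real k + 4 > 0" by simp
  have "(2 * real k + 4) * ee k = ((2 * real k + 4) * (2 * real k + 2)) * bb (Suc k) ^ 2"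
    by (simp add: ee_def algebra_simps)
  also have "\<dots> \<le> (2 * real k + 3)^2 * bb (Suc k) ^ 2"
    by (intro mult_right_mono) (auto simp: power2_eq_square algebra_simps)
  also have "\<dots> = (bb (Suc (Suc k)) * (2 * real (Suc k) + 2))^2"
    unfolding bb_sq by (simp add: power2_eq_square algebra_simps)
  also have "\<dots> = (2 * real k + 4) * ee (Suc k)"
    by (simp add: ee_def power2_eq_square algebra_simps)
  finally show "ee k \<le> ee (Suc k)" using p by (simp only: mult_le_cancel_left_pos)
qed

lemma ee_lim: "ee \<longlonglongrightarrow> 2 / pi"
proof -
  have "(\<lambda>k. cc (Suc k) * ((2 * real k + 2) / (2 * real k + 3))) \<longlonglongrightarrow> 2 / pi * 1"
    using cc_lim[THEN LIMSEQ_Suc] by (intro tendsto_mult) (auto, real_asymp)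
  moreover have "cc (Suc k) * ((2 * real k + 2) / (2 * real k + 3)) = ee k" for k
    by (simp add: cc_def ee_def field_simps)
  ultimately show ?thesis by simp
qed

lemma bb_upper: "k \<ge> 1 \<Longrightarrow> bb k ^ 2 \<le> 1 / (pi * real k)"
proof -
  assume "k \<ge> 1"
  then obtain m where k: "k = Suc m" by (cases k) auto
  have "ee m \<le> 2 / pi" using incseq_le[OF ee_inc ee_lim] .
  hence "bb k ^ 2 \<le> (2 / pi) / (2 * real m + 2)" unfolding ee_def k
    by (subst pos_le_divide_eq) (auto simp: mult.commute)
  moreover have "pi * (2 * real m + 2) = 2 * (pi * real k)" using k by (simp add: algebra_simps)
  hence "(2 / pi) / (2 * real m + 2) = 1 / (pi * real k)" by (simp add: divide_divide_eq_left)
  ultimately show ?thesis by simp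
qed

declare binomial_Suc_Suc [simp]

lemma tt_binsum: "tt n = (\<Sum>j\<le>n. real (n choose (2*j)) * real ((2*j) choose j))"
proof -
  have "tt n = real (trinom n n)" by (simp add: tt_def aa_def)
  also have "\<dots> = (\<Sum>j\<le>n. real ((n choose j) * (if 2*j \<le> n then (n-j) choose (n - 2*j) else 0)))"
    by (simp add: trinom_sum)
  also have "\<dots> = (\<Sum>j\<le>n. real (n choose (2*j)) * real ((2*j) choose j))"
  proof (rule sum.cong[OF refl])
    fix j assume "j \<in> {..n}"
    show "real ((n choose j) * (if 2*j \<le> n then (n-j) choose (n - 2*j) else 0)) = real (n choose (2*j)) * real ((2*j) choose j)"
    proof (cases "2*j \<le> n")
      case True
      have s: "(n-j) choose (n - 2*j) = (n-j) choose j"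
        using binomial_symmetric[of j "n-j"] True by (simp add: diff_diff_left mult_2)
      have "(n choose (2*j)) * ((2*j) choose j) = (n choose j) * ((n - j) choose (2*j - j))"
        using True by (intro choose_mult) auto
      hence e: "(n choose (2*j)) * ((2*j) choose j) = (n choose j) * ((n - j) choose j)" by simp
      have "real ((n choose j) * (if 2*j \<le> n then (n-j) choose (n - 2*j) else 0)) = real ((n choose j) * ((n-j) choose j))"
        using True s by simp
      also have "\<dots> = real ((n choose (2*j)) * ((2*j) choose j))" using e by simp
      finally show ?thesis by simp
    next
      case False thus ?thesis by simp
    qed
  qed
  finally show ?thesis .
qed

definition ww :: "nat \<Rightarrow> nat \<Rightarrow> real" where "ww n j = real (n choose (2*j)) * 4 ^ j / 3 ^ n"

lemma ww_nonneg: "ww n j \<ge> 0" by (simp add: ww_def)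

lemma tt_ww: "tt n / 3 ^ n = (\<Sum>j\<le>n. ww n j * bb j)"
  unfolding tt_binsum sum_divide_distrib
  by (intro sum.cong refl) (simp add: ww_def bb_def)

lemma even_binsum: "(\<Sum>j\<le>n. real (n choose (2*j)) * 4 ^ j) = (3 ^ n + (-1) ^ n) / 2"
proof -
  have "(\<Sum>j\<le>n. real (n choose (2*j)) * 4 ^ j) = (\<Sum>j<n+1. real (n choose (2*j)) * 2 ^ (2*j))"
    by (intro sum.cong) (auto simp: power_mult)
  also have "\<dots> = (\<Sum>i<2*(n+1). if even i then real (n choose i) * 2 ^ i else 0)"
    using sum_split_even_odd[of "\<lambda>i. real (n choose i) * 2 ^ i" "\<lambda>_. 0" "n+1"] by simp
  also have "\<dots> = (\<Sum>i\<le>n. if even i then real (n choose i) * 2 ^ i else 0)"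
    by (rule sum.mono_neutral_right) auto
  also have "\<dots> = (\<Sum>i\<le>n. (real (n choose i) * 2 ^ i * 1 ^ (n - i) + real (n choose i) * (-2) ^ i * 1 ^ (n - i)) / 2)"
    by (intro sum.cong refl) (auto simp: power_minus')
  also have "\<dots> = ((2 + 1) ^ n + ((-2) + 1) ^ n) / 2"
    unfolding binomial_ring sum_divide_distrib[symmetric] sum.distrib by simp
  finally show ?thesis by simp
qed

lemma sigma_eq: "(\<Sum>j\<le>n. ww n j) = (1 + (-1/3) ^ n) / 2"
proof -
  have "(\<Sum>j\<le>n. ww n j) = (\<Sum>j\<le>n. real (n choose (2*j)) * 4 ^ j) / 3 ^ n"
    unfolding ww_def sum_divide_distrib by simp
  also have "\<dots> = (3 ^ n + (-1) ^ n) / 2 / 3 ^ n" by (simp add: even_binsum)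
  also have "\<dots> = (1 + (-1/3) ^ n) / 2"
  proof -
    have "(3::real) ^ n * (-1/3) ^ n = (-1) ^ n" by (simp add: power_mult_distrib[symmetric])
    thus ?thesis by (simp add: field_simps)
  qed
  finally show ?thesis .
qed

lemma sigma_lim: "(\<lambda>n. \<Sum>j\<le>n. ww n j) \<longlonglongrightarrow> 1/2"
proof -
  have "(\<lambda>n. (1 + (-1/3::real) ^ n) / 2) \<longlonglongrightarrow> (1 + 0) / 2"
    by (intro tendsto_intros LIMSEQ_power_zero) auto
  thus ?thesis by (simp add: sigma_eq)
qed

lemma bad_mass:
  assumes n: "n > 0" and d: "\<delta> \<ge> 0"
  shows "(\<Sum>j\<in>{j. j \<le> n \<and> \<delta> \<le> \<bar>2 * real j / real n - 2/3\<bar>}. ww n j) \<le> 2 * exp (- 2 * real n * \<delta>^2)"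
proof -
  define p where "p = binomial_pmf n (2/3::real)"
  define A where "A = {x::nat. \<delta> \<le> \<bar>real x / real n - 2/3\<bar>}"
  interpret binomial_distribution n "2/3" by unfold_locales simp
  have H: "measure_pmf.prob p A \<le> 2 * exp (real_of_int (- 2 * int n) * \<delta>^2)"
    unfolding p_def A_def using prob_abs_ge'[OF n d] .
  have sp: "set_pmf p = {..n}" by (simp add: p_def)
  have "measure_pmf.prob p A = measure_pmf.prob p (A \<inter> set_pmf p)" by (simp add: measure_Int_set_pmf)
  also have "\<dots> = (\<Sum>i\<in>A \<inter> {..n}. pmf p i)" unfolding sp by (rule measure_measure_pmf_finite) simp
  finally have P: "measure_pmf.prob p A = (\<Sum>i\<in>A \<inter> {..n}. pmf p i)" .
  have pm: "pmf p i = real (n choose i) * 2 ^ i / 3 ^ n" if "i \<le> n" for i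
  proof -
    have e1: "pmf p i = real (n choose i) * ((2/3) ^ i * (1 - 2/3) ^ (n - i))" by (simp add: p_def)
    have "(2/3::real) ^ i * (1 - 2/3) ^ (n - i) = 2 ^ i / 3 ^ n"
    proof -
      have "(3::real) ^ n = 3 ^ i * 3 ^ (n - i)" using that by (simp flip: power_add)
      thus ?thesis by (simp add: power_divide field_simps)
    qed
    thus ?thesis using e1 by simp
  qed
  define B where "B = {j. j \<le> n \<and> \<delta> \<le> \<bar>2 * real j / real n - 2/3\<bar>}"
  have "(\<Sum>j\<in>B. ww n j) = (\<Sum>j\<in>B \<inter> {j. 2*j \<le> n}. ww n j)"
    by (rule sum.mono_neutral_right) (auto simp: B_def ww_def)
  also have "\<dots> = (\<Sum>j\<in>B \<inter> {j. 2*j \<le> n}. pmf p (2*j))"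
    by (intro sum.cong refl) (auto simp: pm ww_def power_mult)
  also have "\<dots> = (\<Sum>i\<in>(\<lambda>j. 2*j) ` (B \<inter> {j. 2*j \<le> n}). pmf p i)"
    by (subst sum.reindex) (auto intro: inj_onI)
  also have "\<dots> \<le> (\<Sum>i\<in>A \<inter> {..n}. pmf p i)"
    by (intro sum_mono2) (auto simp: A_def B_def)
  also have "\<dots> \<le> 2 * exp (- 2 * real n * \<delta>^2)" using H P by simp
  finally show ?thesis unfolding B_def .
qed

definition GS :: "nat \<Rightarrow> real \<Rightarrow> nat set" where
  "GS n \<delta> = {j. j \<le> n \<and> \<bar>2 * real j / real n - 2/3\<bar> < \<delta>}"
definition BS :: "nat \<Rightarrow> real \<Rightarrow> nat set" where
  "BS n \<delta> = {j. j \<le> n \<and> \<delta> \<le> \<bar>2 * real j / real n - 2/3\<bar>}"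

lemma GS_BS: "{..n} = GS n \<delta> \<union> BS n \<delta>" "GS n \<delta> \<inter> BS n \<delta> = {}" "finite (GS n \<delta>)" "finite (BS n \<delta>)"
  by (auto simp: GS_def BS_def)

lemma u_split: "(\<Sum>j\<le>n. f j) = (\<Sum>j\<in>GS n \<delta>. f j) + (\<Sum>j\<in>BS n \<delta>. f j)"
  unfolding GS_BS(1)[of n \<delta>] by (rule sum.union_disjoint) (use GS_BS in auto)

lemma GS_prop:
  assumes n: "n \<ge> 1" and d: "\<delta> \<le> 1/10" and j: "j \<in> GS n \<delta>"
  shows "real n * (1/3 - \<delta>/2) \<le> real j" "j \<ge> 1" "2 * real j \<le> real n * (2/3 + \<delta>)"
proof -
  have np: "real n > 0" using n by simp
  have a: "\<bar>2 * real j / real n - 2/3\<bar> < \<delta>" using j by (simp add: GS_def)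
  hence "2 * real j / real n > 2/3 - \<delta>" "2 * real j / real n < 2/3 + \<delta>" by auto
  hence b1: "2 * real j > real n * (2/3 - \<delta>)" and b2: "2 * real j < real n * (2/3 + \<delta>)"
    using np by (simp_all add: field_simps)
  show "real n * (1/3 - \<delta>/2) \<le> real j" using b1 by (simp add: algebra_simps)
  show "2 * real j \<le> real n * (2/3 + \<delta>)" using b2 by simp
  have "real n * (2/3 - \<delta>) > 0" using np d by simp
  hence "real j > 0" using b1 by simp
  thus "j \<ge> 1" by simp
qed

lemma fr1: "(n::real) > 0 \<Longrightarrow> j > 0 \<Longrightarrow> c > 0 \<Longrightarrow> n * c \<le> j \<Longrightarrow> n / (pi * j) \<le> 1 / (pi * c)"
proof -
  assume a: "(n::real) > 0" "j > 0" "c > 0" "n * c \<le> j"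
  have "n / (pi*j) = (n * c) / (pi * j * c)" using a by (simp add: field_simps)
  also have "\<dots> \<le> j / (pi * j * c)" using a by (intro divide_right_mono) auto
  also have "\<dots> = 1 / (pi * c)" using a by (simp add: field_simps)
  finally show ?thesis .
qed
lemma fr2: "(n::real) > 0 \<Longrightarrow> a > 0 \<Longrightarrow> b > 0 \<Longrightarrow> b \<le> n * a \<Longrightarrow> 2 / (pi * a) \<le> n * (2 / (pi * b))"
proof -
  assume h: "(n::real) > 0" "a > 0" "b > 0" "b \<le> n * a"
  have "2 / (pi * a) = 2 * n / (pi * (n * a))" using h by (simp add: field_simps)
  also have "\<dots> \<le> 2 * n / (pi * b)" using h by (intro divide_left_mono mult_left_mono mult_pos_pos) auto
  also have "\<dots> = n * (2 / (pi * b))" by simp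
  finally show ?thesis .
qed

lemma u_upper:
  assumes n: "n \<ge> 1" and d0: "0 \<le> \<delta>" and d: "\<delta> \<le> 1/10"
  shows "sqrt (real n) * (tt n / 3 ^ n) \<le> sqrt (1 / (pi * (1/3 - \<delta>/2))) * (\<Sum>j\<le>n. ww n j)
            + sqrt (real n) * (2 * exp (- 2 * real n * \<delta>^2))"
proof -
  define cU where "cU = sqrt (1 / (pi * (1/3 - \<delta>/2)))"
  have np: "real n > 0" using n by simp
  have cpos: "1/3 - \<delta>/2 > 0" using d by simp
  have pt: "sqrt (real n) * bb j \<le> cU" if j: "j \<in> GS n \<delta>" for j
  proof -
    note g = GS_prop[OF n d j]
    have jp: "real j > 0" using g(2) by simp
    have "bb j \<le> sqrt (1 / (pi * real j))"
      using bb_upper[OF g(2)] by (intro real_le_rsqrt) auto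
    hence "sqrt (real n) * bb j \<le> sqrt (real n) * sqrt (1 / (pi * real j))"
      by (intro mult_left_mono) auto
    also have "\<dots> = sqrt (real n / (pi * real j))" by (simp add: real_sqrt_mult[symmetric])
    also have "\<dots> \<le> cU" unfolding cU_def
    proof (rule real_sqrt_le_mono)
      have "real n * (1/3 - \<delta>/2) \<le> real j" by (rule g(1))
      thus "real n / (pi * real j) \<le> 1 / (pi * (1/3 - \<delta>/2))"
        using jp cpos np by (intro fr1) auto
    qed
    finally show ?thesis .
  qed
  have "sqrt (real n) * (tt n / 3 ^ n) = (\<Sum>j\<le>n. ww n j * (sqrt (real n) * bb j))"
    unfolding tt_ww sum_distrib_left by (simp add: algebra_simps)
  also have "\<dots> = (\<Sum>j\<in>GS n \<delta>. ww n j * (sqrt (real n) * bb j)) + (\<Sum>j\<in>BS n \<delta>. ww n j * (sqrt (real n) * bb j))"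
    by (rule u_split)
  also have "(\<Sum>j\<in>GS n \<delta>. ww n j * (sqrt (real n) * bb j)) \<le> (\<Sum>j\<in>GS n \<delta>. ww n j * cU)"
    by (intro sum_mono mult_left_mono pt ww_nonneg)
  also have "\<dots> = cU * (\<Sum>j\<in>GS n \<delta>. ww n j)" by (simp add: sum_distrib_left mult.commute)
  also have "\<dots> \<le> cU * (\<Sum>j\<le>n. ww n j)"
    using cpos by (intro mult_left_mono sum_mono2) (auto simp: GS_def ww_nonneg cU_def)
  also have "(\<Sum>j\<in>BS n \<delta>. ww n j * (sqrt (real n) * bb j)) \<le> (\<Sum>j\<in>BS n \<delta>. ww n j * sqrt (real n))"
    using bb_le1 bb_pos by (intro sum_mono mult_left_mono ww_nonneg) (auto intro: mult_left_le)
  also have "\<dots> = sqrt (real n) * (\<Sum>j\<in>BS n \<delta>. ww n j)" by (simp add: sum_distrib_left mult.commute)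
  also have "\<dots> \<le> sqrt (real n) * (2 * exp (- 2 * real n * \<delta>^2))"
    using bad_mass[of n \<delta>] n d0 by (intro mult_left_mono) (auto simp: BS_def)
  finally show ?thesis unfolding cU_def by simp
qed

lemma u_lower:
  assumes n: "n \<ge> 1" and d0: "0 \<le> \<delta>" and d: "\<delta> \<le> 1/10"
  shows "sqrt (2 / (pi * (2/3 + \<delta> + 1 / real n))) * ((\<Sum>j\<le>n. ww n j) - 2 * exp (- 2 * real n * \<delta>^2))
           \<le> sqrt (real n) * (tt n / 3 ^ n)"
proof -
  define cL where "cL = sqrt (2 / (pi * (2/3 + \<delta> + 1 / real n)))"
  have np: "real n > 0" using n by simp
  have pt: "cL \<le> sqrt (real n) * bb j" if j: "j \<in> GS n \<delta>" for j
  proof -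
    note g = GS_prop[OF n d j]
    have "sqrt (2 / (pi * (2 * real j + 1))) \<le> bb j"
      using bb_lower[of j] bb_pos[of j] by (intro real_le_lsqrt) auto
    hence "sqrt (real n) * sqrt (2 / (pi * (2 * real j + 1))) \<le> sqrt (real n) * bb j"
      by (intro mult_left_mono) auto
    moreover have "cL \<le> sqrt (real n) * sqrt (2 / (pi * (2 * real j + 1)))"
    proof -
      have "2 / (pi * (2/3 + \<delta> + 1 / real n)) \<le> real n * (2 / (pi * (2 * real j + 1)))"
      proof -
        have "2 * real j + 1 \<le> real n * (2/3 + \<delta> + 1 / real n)" using g(3) np by (simp add: algebra_simps)
        moreover have "2 * real j + 1 > 0" by simp
        moreover have "2/3 + \<delta> + 1 / real n > 0" using d0 np by (simp add: add_pos_nonneg)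
        ultimately show ?thesis using np by (intro fr2) auto
      qed
      hence "cL \<le> sqrt (real n * (2 / (pi * (2 * real j + 1))))" unfolding cL_def by (rule real_sqrt_le_mono)
      thus ?thesis by (simp only: real_sqrt_mult)
    qed
    ultimately show ?thesis by simp
  qed
  have cL0: "cL \<ge> 0" unfolding cL_def using d0 np by (simp add: add_pos_nonneg)
  have "cL * ((\<Sum>j\<le>n. ww n j) - 2 * exp (- 2 * real n * \<delta>^2)) \<le> cL * (\<Sum>j\<in>GS n \<delta>. ww n j)"
  proof (rule mult_left_mono[OF _ cL0])
    have "(\<Sum>j\<le>n. ww n j) = (\<Sum>j\<in>GS n \<delta>. ww n j) + (\<Sum>j\<in>BS n \<delta>. ww n j)" by (rule u_split)
    moreover have "(\<Sum>j\<in>BS n \<delta>. ww n j) \<le> 2 * exp (- 2 * real n * \<delta>^2)"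
      using bad_mass[of n \<delta>] n d0 by (auto simp: BS_def)
    ultimately show "(\<Sum>j\<le>n. ww n j) - 2 * exp (- 2 * real n * \<delta>^2) \<le> (\<Sum>j\<in>GS n \<delta>. ww n j)" by simp
  qed
  also have "\<dots> = (\<Sum>j\<in>GS n \<delta>. ww n j * cL)" by (simp add: sum_distrib_left mult.commute)
  also have "\<dots> \<le> (\<Sum>j\<in>GS n \<delta>. ww n j * (sqrt (real n) * bb j))"
    by (intro sum_mono mult_left_mono pt ww_nonneg)
  also have "\<dots> \<le> (\<Sum>j\<in>GS n \<delta>. ww n j * (sqrt (real n) * bb j)) + (\<Sum>j\<in>BS n \<delta>. ww n j * (sqrt (real n) * bb j))"
    by (intro add_increasing2 sum_nonneg mult_nonneg_nonneg ww_nonneg) (auto intro: less_imp_le[OF bb_pos])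
  also have "\<dots> = (\<Sum>j\<le>n. ww n j * (sqrt (real n) * bb j))" by (rule u_split[symmetric])
  also have "\<dots> = sqrt (real n) * (tt n / 3 ^ n)"
    unfolding tt_ww sum_distrib_left by (simp add: algebra_simps)
  finally show ?thesis unfolding cL_def .
qed

definition KK :: real where "KK = sqrt (3 / pi) / 2"

lemma u_lim: "(\<lambda>n. sqrt (real n) * (tt n / 3 ^ n)) \<longlonglongrightarrow> KK"
proof -
  define \<delta> where "\<delta> = (\<lambda>n::nat. real n powr (-1/4))"
  define \<sigma> where "\<sigma> = (\<lambda>n. \<Sum>j\<le>n. ww n j)"
  define E where "E = (\<lambda>n. 2 * exp (- 2 * real n * \<delta> n ^ 2))"
  define L where "L = (\<lambda>n. sqrt (2 / (pi * (2/3 + \<delta> n + 1 / real n))) * (\<sigma> n - E n))"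
  define U where "U = (\<lambda>n. sqrt (1 / (pi * (1/3 - \<delta> n / 2))) * \<sigma> n + sqrt (real n) * E n)"
  have d0: "\<delta> \<longlonglongrightarrow> 0" unfolding \<delta>_def by real_asymp
  have E0: "E \<longlonglongrightarrow> 0" unfolding E_def \<delta>_def by real_asymp
  have E1: "(\<lambda>n. sqrt (real n) * E n) \<longlonglongrightarrow> 0" unfolding E_def \<delta>_def by real_asymp
  have s: "\<sigma> \<longlonglongrightarrow> 1/2" unfolding \<sigma>_def by (rule sigma_lim)
  have inv: "(\<lambda>n. 1 / real n) \<longlonglongrightarrow> 0" by real_asymp
  have ev: "eventually (\<lambda>n. n \<ge> 1 \<and> \<delta> n \<le> 1/10) sequentially"
  proof -
    have "eventually (\<lambda>n. \<delta> n < 1/10) sequentially" using d0 by (rule order_tendstoD) simp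
    moreover have "eventually (\<lambda>n::nat. n \<ge> 1) sequentially" by (rule eventually_ge_at_top)
    ultimately show ?thesis by eventually_elim auto
  qed
  have d_nonneg: "\<delta> n \<ge> 0" for n unfolding \<delta>_def by simp
  have "(\<lambda>n. sqrt (2 / (pi * (2/3 + \<delta> n + 1 / real n)))) \<longlonglongrightarrow> sqrt (2 / (pi * (2/3 + 0 + 0)))"
    by (intro tendsto_intros d0 inv) auto
  moreover have "sqrt (2 / (pi * (2/3 + 0 + 0))) = sqrt (3 / pi)" by (simp add: field_simps)
  ultimately have cL: "(\<lambda>n. sqrt (2 / (pi * (2/3 + \<delta> n + 1 / real n)))) \<longlonglongrightarrow> sqrt (3 / pi)" by simp
  have "(\<lambda>n. sqrt (1 / (pi * (1/3 - \<delta> n / 2)))) \<longlonglongrightarrow> sqrt (1 / (pi * (1/3 - 0 / 2)))"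
    by (intro tendsto_intros d0) auto
  moreover have "sqrt (1 / (pi * (1/3 - 0 / 2))) = sqrt (3 / pi)" by (simp add: field_simps)
  ultimately have cU: "(\<lambda>n. sqrt (1 / (pi * (1/3 - \<delta> n / 2)))) \<longlonglongrightarrow> sqrt (3 / pi)" by simp
  have Ll: "L \<longlonglongrightarrow> KK"
  proof -
    have "L \<longlonglongrightarrow> sqrt (3 / pi) * (1/2 - 0)" unfolding L_def by (intro tendsto_intros cL s E0)
    thus ?thesis by (simp add: KK_def)
  qed
  have Ul: "U \<longlonglongrightarrow> KK"
  proof -
    have "U \<longlonglongrightarrow> sqrt (3 / pi) * (1/2) + 0" unfolding U_def by (intro tendsto_intros cU s E1)
    thus ?thesis by (simp add: KK_def)
  qed
  show ?thesis
  proof (rule tendsto_sandwich[OF _ _ Ll Ul])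
    show "eventually (\<lambda>n. L n \<le> sqrt (real n) * (tt n / 3 ^ n)) sequentially"
      using ev by eventually_elim (use u_lower d_nonneg in \<open>auto simp: L_def \<sigma>_def E_def\<close>)
    show "eventually (\<lambda>n. sqrt (real n) * (tt n / 3 ^ n) \<le> U n) sequentially"
      using ev by eventually_elim (use u_upper d_nonneg in \<open>auto simp: U_def \<sigma>_def E_def\<close>)
  qed
qed

definition vv :: "nat \<Rightarrow> real" where "vv n = sqrt (real n) * (tt n / 3 ^ n)"

lemma vv_lim: "vv \<longlonglongrightarrow> KK" unfolding vv_def[abs_def] by (rule u_lim)

lemma KK_pos: "KK > 0" by (simp add: KK_def)

lemma tt_scale:
  assumes "k > 0" "a \<ge> 0"
  shows "tt k * sqrt a / 3 ^ n = vv k * (3 ^ k / 3 ^ n) * sqrt (a / real k)"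
proof -
  have sk: "sqrt (real k) > 0" using assms by simp
  have "vv k * (3 ^ k / 3 ^ n) * sqrt (a / real k) = sqrt (real k) * tt k * sqrt a / (sqrt (real k) * 3 ^ n)"
    by (simp add: vv_def real_sqrt_divide field_simps)
  also have "\<dots> = tt k * sqrt a / 3 ^ n" using sk by simp
  finally show ?thesis by simp
qed

lemma sq_lim: "(\<lambda>m. sqrt ((real m + 1) / (real m + c))) \<longlonglongrightarrow> 1" if "c > 0" for c :: real
  using that by real_asymp

lemma sq_lim0: "(\<lambda>m. sqrt ((real m + 1) / real m)) \<longlonglongrightarrow> 1"
  by real_asymp

lemma vv_shift: "(\<lambda>m. vv (m + k)) \<longlonglongrightarrow> KK"
  using vv_lim by (rule LIMSEQ_ignore_initial_segment)

lemma ellM_T: "real (ellM (Suc m)) = (tt (m+3) - tt (m+2) - 3 * tt (m+1) - tt m) / 2"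
  using ellM_dd[of "Suc m"] dd_T[of m] dd_T[of "Suc m"] by (simp add: eval_nat_numeral field_simps)

lemma r_lim: "(\<lambda>m. real (ellM (Suc m)) * sqrt (real (Suc m)) / 3 ^ Suc m) \<longlonglongrightarrow> 4 * KK / 3"
proof -
  define R where "R = (\<lambda>m::nat. (vv (m+3) * 9 * sqrt ((real m + 1) / (real m + 3))
       - vv (m+2) * 3 * sqrt ((real m + 1) / (real m + 2)) - 3 * vv (m + 1)
       - vv (m + 0) / 3 * sqrt ((real m + 1) / real m)) / 2)"
  have "R \<longlonglongrightarrow> (KK * 9 * 1 - KK * 3 * 1 - 3 * KK - KK / 3 * 1) / 2"
    unfolding R_def by (intro tendsto_intros vv_shift sq_lim sq_lim0) auto
  hence RL: "R \<longlonglongrightarrow> 4 * KK / 3" by (simp add: field_simps)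
  have "eventually (\<lambda>m. R m = real (ellM (Suc m)) * sqrt (real (Suc m)) / 3 ^ Suc m) sequentially"
    using eventually_ge_at_top[of "1::nat"]
  proof eventually_elim
    case (elim m)
    define a where "a = real m + 1"
    have a0: "a \<ge> 0" by (simp add: a_def)
    have t3: "tt (m+3) * sqrt a / 3 ^ Suc m = vv (m+3) * 9 * sqrt (a / (real m + 3))"
      using tt_scale[of "m+3" a "Suc m"] a0 by (simp add: power_add)
    have t2: "tt (m+2) * sqrt a / 3 ^ Suc m = vv (m+2) * 3 * sqrt (a / (real m + 2))"
      using tt_scale[of "m+2" a "Suc m"] a0 by (simp add: power_add)
    have t1: "tt (m+1) * sqrt a / 3 ^ Suc m = vv (m+1)"
      using tt_scale[of "m+1" a "Suc m"] a0 by (simp add: a_def)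
    have t0: "tt m * sqrt a / 3 ^ Suc m = vv m / 3 * sqrt (a / real m)"
      using tt_scale[of m a "Suc m"] a0 elim by simp
    have "real (ellM (Suc m)) * sqrt (real (Suc m)) / 3 ^ Suc m =
        (tt (m+3) * sqrt a / 3 ^ Suc m - tt (m+2) * sqrt a / 3 ^ Suc m - 3 * (tt (m+1) * sqrt a / 3 ^ Suc m)
          - tt m * sqrt a / 3 ^ Suc m) / 2"
      unfolding ellM_T a_def by (simp add: field_simps)
    also have "\<dots> = R m" unfolding t3 t2 t1 t0 by (simp add: R_def a_def)
    finally show ?case by simp
  qed
  thus ?thesis using RL by (rule Lim_transform_eventually[rotated])
qed

theorem part_asym1: "(\<lambda>n. real (ellM n)) \<sim>[at_top] (\<lambda>n. 2 * 3 ^ n / sqrt (3 * real n * pi))"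
proof (rule asymp_equivI')
  have c: "4 * KK / 3 * (sqrt (3 * pi) / 2) = 1"
  proof -
    have "sqrt (3 / pi) * sqrt (3 * pi) = sqrt 9" by (simp flip: real_sqrt_mult)
    thus ?thesis by (simp add: KK_def field_simps)
  qed
  have "(\<lambda>m. real (ellM (Suc m)) * sqrt (real (Suc m)) / 3 ^ Suc m * (sqrt (3 * pi) / 2)) \<longlonglongrightarrow> 4 * KK / 3 * (sqrt (3 * pi) / 2)"
    by (intro tendsto_intros r_lim)
  moreover have "(\<lambda>m. real (ellM (Suc m)) * sqrt (real (Suc m)) / 3 ^ Suc m * (sqrt (3 * pi) / 2)) =
      (\<lambda>m. real (ellM (Suc m)) / (2 * 3 ^ Suc m / sqrt (3 * real (Suc m) * pi)))"
  proof (rule ext)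
    fix m
    have "sqrt (3 * real (Suc m) * pi) = sqrt (real (Suc m)) * sqrt (3 * pi)"
      by (simp flip: real_sqrt_mult add: algebra_simps)
    thus "real (ellM (Suc m)) * sqrt (real (Suc m)) / 3 ^ Suc m * (sqrt (3 * pi) / 2) =
      real (ellM (Suc m)) / (2 * 3 ^ Suc m / sqrt (3 * real (Suc m) * pi))"
      by (simp only:) (simp add: field_simps)
  qed
  ultimately have "(\<lambda>m. real (ellM (Suc m)) / (2 * 3 ^ Suc m / sqrt (3 * real (Suc m) * pi))) \<longlonglongrightarrow> 1"
    using c by simp
  thus "((\<lambda>n. real (ellM n) / (2 * 3 ^ n / sqrt (3 * real n * pi))) \<longlongrightarrow> 1) at_top"
    by (rule filterlim_sequentially_Suc[THEN iffD1])
qed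

lemma motzkin_T: "real (motzkin (Suc m)) = (tt (m+3) - tt (m+2)) / (2 * (real m + 2))"
proof -
  have e1: "aa (Suc (Suc m)) 1 = int (Suc (Suc m)) * (aa (Suc m) 0 - aa (Suc m) 2)"
    using aa_E[of 1 "Suc m"] by simp
  have e2: "2 * aa (Suc m + 1) 1 = aa (Suc m + 2) 0 - aa (Suc m + 1) 0" by (rule aa1_via_T)
  have "int (motzkin (Suc m)) = aa (Suc m) 0 - aa (Suc m) 2" by (rule motzkin_aa)
  hence e3: "aa (Suc (Suc m)) 1 = (int m + 2) * int (motzkin (Suc m))" using e1 by simp
  have "2 * (int m + 2) * int (motzkin (Suc m)) = 2 * aa (Suc m + 1) 1" using e3 by simp
  also have "\<dots> = aa (m + 3) 0 - aa (m + 2) 0" using e2 by (simp add: eval_nat_numeral)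
  finally have "2 * (int m + 2) * int (motzkin (Suc m)) = aa (m + 3) 0 - aa (m + 2) 0" .
  hence "real_of_int (2 * (int m + 2) * int (motzkin (Suc m))) = real_of_int (aa (m + 3) 0 - aa (m + 2) 0)" by simp
  hence "2 * (real m + 2) * real (motzkin (Suc m)) = tt (m+3) - tt (m+2)" by (simp add: tt_def)
  thus ?thesis by (simp add: field_simps)
qed

lemma s_lim: "(\<lambda>m. real (motzkin (Suc m)) * (real m + 2) * sqrt (real (Suc m)) / 3 ^ Suc m) \<longlonglongrightarrow> 3 * KK"
proof -
  define S where "S = (\<lambda>m::nat. (vv (m+3) * 9 * sqrt ((real m + 1) / (real m + 3))
       - vv (m+2) * 3 * sqrt ((real m + 1) / (real m + 2))) / 2)"
  have "S \<longlonglongrightarrow> (KK * 9 * 1 - KK * 3 * 1) / 2"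
    unfolding S_def by (intro tendsto_intros vv_shift sq_lim) auto
  hence SL: "S \<longlonglongrightarrow> 3 * KK" by (simp add: field_simps)
  have P: "S m = real (motzkin (Suc m)) * (real m + 2) * sqrt (real (Suc m)) / 3 ^ Suc m" for m
  proof -
    define a where "a = real m + 1"
    have a0: "a \<ge> 0" by (simp add: a_def)
    have t3: "tt (m+3) * sqrt a / 3 ^ Suc m = vv (m+3) * 9 * sqrt (a / (real m + 3))"
      using tt_scale[of "m+3" a "Suc m"] a0 by (simp add: power_add)
    have t2: "tt (m+2) * sqrt a / 3 ^ Suc m = vv (m+2) * 3 * sqrt (a / (real m + 2))"
      using tt_scale[of "m+2" a "Suc m"] a0 by (simp add: power_add)
    have M2: "real (motzkin (Suc m)) * (real m + 2) = (tt (m+3) - tt (m+2)) / 2"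
      unfolding motzkin_T by (simp add: field_simps)
    have sa: "real (Suc m) = a" by (simp add: a_def)
    have "real (motzkin (Suc m)) * (real m + 2) * sqrt (real (Suc m)) / 3 ^ Suc m =
        (tt (m+3) * sqrt a / 3 ^ Suc m - tt (m+2) * sqrt a / 3 ^ Suc m) / 2"
      unfolding M2 sa by (simp add: field_simps)
    also have "\<dots> = S m" unfolding t3 t2 by (simp add: S_def a_def)
    finally show ?thesis by simp
  qed
  have "(\<lambda>m. real (motzkin (Suc m)) * (real m + 2) * sqrt (real (Suc m)) / 3 ^ Suc m) = S"
    by (rule ext) (rule P[symmetric])
  thus ?thesis using SL by simp
qed

lemma alg_q: "(c::real) \<noteq> 0 \<Longrightarrow> M \<noteq> 0 \<Longrightarrow> p \<noteq> 0 \<Longrightarrow> q \<noteq> 0 \<Longrightarrow>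
  (E*c)/(M*p*c) * (9/4*(p/q)) = E/M/(4/9*q)"
  by (simp add: field_simps)

theorem part_asym2: "(\<lambda>n. real (ellM n) / real (card (motzkin_paths n))) \<sim>[at_top] (\<lambda>n. 4/9 * real n)"
proof (rule asymp_equivI')
  define r where "r = (\<lambda>m. real (ellM (Suc m)) * sqrt (real (Suc m)) / 3 ^ Suc m)"
  define s where "s = (\<lambda>m. real (motzkin (Suc m)) * (real m + 2) * sqrt (real (Suc m)) / 3 ^ Suc m)"
  have rl: "r \<longlonglongrightarrow> 4 * KK / 3" unfolding r_def by (rule r_lim)
  have sl: "s \<longlonglongrightarrow> 3 * KK" unfolding s_def by (rule s_lim)
  have ql: "(\<lambda>m. (real m + 2) / (real m + 1)) \<longlonglongrightarrow> 1" by real_asymp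
  have "(\<lambda>m. r m / s m * (9 / 4 * ((real m + 2) / (real m + 1)))) \<longlonglongrightarrow> (4 * KK / 3) / (3 * KK) * (9 / 4 * 1)"
    using KK_pos by (intro tendsto_intros rl sl ql) auto
  moreover have "(4 * KK / 3) / (3 * KK) * (9 / 4 * 1) = 1" using KK_pos by (simp add: field_simps)
  ultimately have L: "(\<lambda>m. r m / s m * (9 / 4 * ((real m + 2) / (real m + 1)))) \<longlonglongrightarrow> 1" by simp
  have ev: "eventually (\<lambda>m. s m > 0) sequentially"
    using order_tendstoD(1)[OF sl, of 0] KK_pos by simp
  have "eventually (\<lambda>m. r m / s m * (9 / 4 * ((real m + 2) / (real m + 1))) =
      real (ellM (Suc m)) / real (card (motzkin_paths (Suc m))) / (4/9 * real (Suc m))) sequentially"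
    using ev
  proof eventually_elim
    case (elim m)
    define E where "E = real (ellM (Suc m))"
    define M where "M = real (motzkin (Suc m))"
    define c where "c = sqrt (real (Suc m)) / 3 ^ Suc m"
    have c0: "c > 0" by (simp add: c_def)
    have rr: "r m = E * c" by (simp add: r_def E_def c_def)
    have ss: "s m = M * (real m + 2) * c" by (simp add: s_def M_def c_def)
    have M0: "M \<noteq> 0" using elim ss by auto
    have "r m / s m * (9 / 4 * ((real m + 2) / (real m + 1))) = E / M / (4/9 * (real m + 1))"
      unfolding rr ss using c0 M0 by (intro alg_q) auto
    thus ?case by (simp add: E_def M_def motzkin_def)
  qed
  hence "(\<lambda>m. real (ellM (Suc m)) / real (card (motzkin_paths (Suc m))) / (4/9 * real (Suc m))) \<longlonglongrightarrow> 1"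
    using L by (rule Lim_transform_eventually[rotated])
  thus "((\<lambda>n. real (ellM n) / real (card (motzkin_paths n)) / (4/9 * real n)) \<longlongrightarrow> 1) at_top"
    by (rule filterlim_sequentially_Suc[THEN iffD1])
qed

theorem mainTheorem8:
  shows "(\<forall>x::real. 0 < \<bar>x\<bar> \<and> \<bar>x\<bar> < 1/3 \<longrightarrow>
            summable (\<lambda>n. real (ellM n) * x ^ n) \<and>
            (\<Sum>n. real (ellM n) * x ^ n) =
              (1 + x) * (1 - 2*x - x^2 - (1 - x) * sqrt (1 - 2*x - 3*x^2))
              / (2 * x^2 * sqrt (1 - 2*x - 3*x^2)))
     \<and> (\<forall>n\<ge>1. int (ellM n) = int (central_trinomial n) - int (motzkin n)
                 + int (central_trinomial (n - 1)) - int (motzkin (n - 1)))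
     \<and> (\<forall>n\<ge>3. ellM n = trinom n (n - 2) + trinom (n - 1) (n - 3))
     \<and> (\<forall>n\<ge>1. real (ellM n) = 2 / real n *
            (\<Sum>k=0..n div 2. real (n choose k) * real ((n - k) choose k)
                 * (real k * real (n - k)) / (real k + 1)))
     \<and> (\<lambda>n. real (ellM n)) \<sim>[at_top] (\<lambda>n. 2 * 3 ^ n / sqrt (3 * real n * pi))
     \<and> (\<lambda>n. real (ellM n) / real (card (motzkin_paths n))) \<sim>[at_top] (\<lambda>n. 4/9 * real n)"
    using part_gf part_i part_ii part_iii part_asym1 part_asym2 by blast

end
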